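(* Let $n$ and $m$ be positive odd integers and $a>0$. Then \[ \int_{-a}^{1}\frac{\sin\bigl(n\sin^{-1}\sqrt t\bigr)\sinh\bigl(m\sinh^{-1}\sqrt{t/a}\bigr)}{\rho_a(t)}\,\frac{t^j\,dt}{\sqrt{(1-t)(1+t/a)}}=\begin{cases}\pi/2,& j=-1,\\ 0,& j=0,1,\ldots,\frac{m+n-2}{2},\end{cases} \] and \[ \int_{-a}^{1}\frac{\cos\bigl(n\sin^{-1}\sqrt t\bigr)\cosh\bigl(m\sinh^{-1}\sqrt{t/a}\bigr)}{\rho_a(t)}\,t^j\,dt=0,\qquad j=0,1,\ldots,\tfrac{m+n-4}{2}. \]
   Context: $\rho_a(t)=\cos\bigl(2n\sin^{-1}\sqrt t\bigr)+\cosh\bigl(2m\sinh^{-1}\sqrt{t/a}\bigr)=T_n(1-2t)+T_m(1+2t/a)$ for $t\in[-a,1]$, where $T_k(\cos\theta)=\cos k\theta$ is the Chebyshev polynomial of the first kind; it is positive on $[-a,1]$. Convention for negative arguments: for $t<0$, $\sqrt t:=i\sqrt{-t}$, $\sin^{-1}(iy):=i\sinh^{-1}y$ ($y\ge0$), $\sinh^{-1}(iy):=i\sin^{-1}y$ ($0\le y\le1$); with this convention all integrands are real. *)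

theory Defs
  imports "HOL-Analysis.Analysis"
begin

text \<open>The paper's integrands, with its convention for negative arguments written out:
for t < 0, sqrt t = i sqrt(-t), arcsin(i y) = i arsinh y, arsinh(i y) = i arcsin y.
Hence for t < 0:
  sin(n asin sqrt t) sinh(m asinh sqrt(t/a)) = (i sinh(n asinh sqrt(-t))) (i sin(m asin sqrt(-t/a))),
  cos(n asin sqrt t) cosh(m asinh sqrt(t/a)) = cosh(n asinh sqrt(-t)) cos(m asin sqrt(-t/a)).\<close>

definition SS :: "nat \<Rightarrow> nat \<Rightarrow> real \<Rightarrow> real \<Rightarrow> real" where
  "SS n m a t = (if 0 \<le> t
     then sin (real n * arcsin (sqrt t)) * sinh (real m * arsinh (sqrt (t / a)))
     else - (sinh (real n * arsinh (sqrt (- t))) * sin (real m * arcsin (sqrt (- t / a)))))"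

definition CC :: "nat \<Rightarrow> nat \<Rightarrow> real \<Rightarrow> real \<Rightarrow> real" where
  "CC n m a t = (if 0 \<le> t
     then cos (real n * arcsin (sqrt t)) * cosh (real m * arsinh (sqrt (t / a)))
     else cosh (real n * arsinh (sqrt (- t))) * cos (real m * arcsin (sqrt (- t / a))))"

definition rho :: "nat \<Rightarrow> nat \<Rightarrow> real \<Rightarrow> real \<Rightarrow> real" where
  "rho n m a t = (if 0 \<le> t
     then cos (2 * real n * arcsin (sqrt t)) + cosh (2 * real m * arsinh (sqrt (t / a)))
     else cosh (2 * real n * arsinh (sqrt (- t))) + cos (2 * real m * arcsin (sqrt (- t / a))))"

end

theory Submission
  imports Defs "HOL-Complex_Analysis.Complex_Analysis"
begin

fun Sh :: "nat \<Rightarrow> 'a::comm_ring_1 \<Rightarrow> 'a \<Rightarrow> 'a" where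
  "Sh 0 u v = 1"
| "Sh (Suc 0) u v = 2*u + v"
| "Sh (Suc (Suc k)) u v = 2*u*Sh (Suc k) u v - v^2 * Sh k u v"

fun Ch :: "nat \<Rightarrow> 'a::comm_ring_1 \<Rightarrow> 'a \<Rightarrow> 'a" where
  "Ch 0 u v = 1"
| "Ch (Suc 0) u v = 2*u - v"
| "Ch (Suc (Suc k)) u v = 2*u*Ch (Suc k) u v - v^2 * Ch k u v"

lemma Sh_hom: "Sh k (x * v) v = v^k * Sh k x 1"
  by (induction k "x * v" v rule: Sh.induct) (auto simp: algebra_simps power2_eq_square)

lemma Ch_hom: "Ch k (x * v) v = v^k * Ch k x 1"
  by (induction k "x * v" v rule: Ch.induct) (auto simp: algebra_simps power2_eq_square)

lemma Sh_of_real: "of_real (Sh k x y) = Sh k (of_real x) (of_real y :: 'a::{real_algebra_1,comm_ring_1})"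
  by (induction k x y rule: Sh.induct) auto

lemma Ch_of_real: "of_real (Ch k x y) = Ch k (of_real x) (of_real y :: 'a::{real_algebra_1,comm_ring_1})"
  by (induction k x y rule: Ch.induct) auto

lemma Sh_q: "2*u = q^2+1 \<Longrightarrow> (q-1) * Sh k u q = q^(2*k+1) - 1"
proof (induction k u q rule: Sh.induct)
  case (1 u v) then show ?case by simp
next
  case (2 u v)
  have "(v-1)*(2*u+v) = (v-1)*(v^2+1+v)" using 2 by simp
  also have "\<dots> = v^3 - 1" by (simp add: algebra_simps power2_eq_square power3_eq_cube)
  finally show ?case by (simp add: numeral_3_eq_3)
next
  case (3 k u v)
  have "(v-1)*Sh (Suc (Suc k)) u v = (2*u)*((v-1)*Sh (Suc k) u v) - v^2*((v-1)*Sh k u v)"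
    by (simp add: algebra_simps)
  also have "\<dots> = (v^2+1)*(v^(2*Suc k+1) - 1) - v^2*(v^(2*k+1)-1)" using 3 by simp
  also have "\<dots> = v^(2*Suc (Suc k)+1) - 1" by (simp add: algebra_simps power_add power2_eq_square)
  finally show ?case .
qed

lemma Ch_q: "2*u = q^2+1 \<Longrightarrow> (q+1) * Ch k u q = q^(2*k+1) + 1"
proof (induction k u q rule: Ch.induct)
  case (1 u v) then show ?case by simp
next
  case (2 u v)
  have "(v+1)*(2*u-v) = (v+1)*(v^2+1-v)" using 2 by simp
  also have "\<dots> = v^3 + 1" by (simp add: algebra_simps power2_eq_square power3_eq_cube)
  finally show ?case by (simp add: numeral_3_eq_3)
next
  case (3 k u v)
  have "(v+1)*Ch (Suc (Suc k)) u v = (2*u)*((v+1)*Ch (Suc k) u v) - v^2*((v+1)*Ch k u v)"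
    by (simp add: algebra_simps)
  also have "\<dots> = (v^2+1)*(v^(2*Suc k+1) + 1) - v^2*(v^(2*k+1)+1)" using 3 by simp
  also have "\<dots> = v^(2*Suc (Suc k)+1) + 1" by (simp add: algebra_simps power_add power2_eq_square)
  finally show ?case .
qed

lemma Sh_zero: "Sh k u 0 = (2*u)^k"
  by (induction k u "0::'a" rule: Sh.induct) auto
lemma Ch_zero: "Ch k u 0 = (2*u)^k"
  by (induction k u "0::'a" rule: Ch.induct) auto
lemma Ch_one: "Ch k 1 1 = 1"
  by (induction k "1::'a" "1::'a" rule: Ch.induct) auto

lemma sin_odd_Sh: "sin (real (2*k+1) * x) = sin x * Sh k (cos (2*x)) 1 \<and>
   sin (real (2*k+3) * x) = sin x * Sh (Suc k) (cos (2*x)) 1"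
proof (induction k)
  case 0
  have e: "3*x = x + 2*x" "x - 2*x = -x" by simp_all
  have h: "sin (y+z) = 2*cos z * sin y - sin (y - z)" for y z :: real
    by (simp add: sin_add sin_diff)
  show ?case using h[of x "2*x"] by (simp add: algebra_simps)
next
  case (Suc k)
  have e: "real (2 * Suc k + 3) * x = real (2*k+3)*x + 2*x" "real (2*k+1)*x = real (2*k+3)*x - 2*x"
    by (simp_all add: algebra_simps)
  have "sin (real (2 * Suc k + 3) * x) = 2*cos (2*x) * sin (real (2*k+3)*x) - sin (real (2*k+1)*x)"
    unfolding e by (simp add: sin_add sin_diff)
  with Suc show ?case by (simp add: algebra_simps)
qed

lemma cos_odd_Ch: "cos (real (2*k+1) * x) = cos x * Ch k (cos (2*x)) 1 \<and>
   cos (real (2*k+3) * x) = cos x * Ch (Suc k) (cos (2*x)) 1"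
proof (induction k)
  case 0
  have e: "3*x = x + 2*x" "x - 2*x = -x" by simp_all
  have h: "cos (y+z) = 2*cos z * cos y - cos (y - z)" for y z :: real
    by (simp add: cos_add cos_diff)
  show ?case using h[of x "2*x"] by (simp add: algebra_simps)
next
  case (Suc k)
  have e: "real (2 * Suc k + 3) * x = real (2*k+3)*x + 2*x" "real (2*k+1)*x = real (2*k+3)*x - 2*x"
    by (simp_all add: algebra_simps)
  have "cos (real (2 * Suc k + 3) * x) = 2*cos (2*x) * cos (real (2*k+3)*x) - cos (real (2*k+1)*x)"
    unfolding e by (simp add: cos_add cos_diff)
  with Suc show ?case by (simp add: algebra_simps)
qed

lemma sinh_odd_Sh: "sinh (real (2*k+1) * x) = sinh x * Sh k (cosh (2*x)) 1 \<and>
   sinh (real (2*k+3) * x) = sinh x * Sh (Suc k) (cosh (2*x)) 1"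
proof (induction k)
  case 0
  have e: "3*x = x + 2*x" "x - 2*x = -x" by simp_all
  have h: "sinh (y+z) = 2*cosh z * sinh y - sinh (y - z)" for y z :: real
    by (simp add: sinh_add sinh_diff)
  show ?case using h[of x "2*x"] by (simp add: algebra_simps)
next
  case (Suc k)
  have e: "real (2 * Suc k + 3) * x = real (2*k+3)*x + 2*x" "real (2*k+1)*x = real (2*k+3)*x - 2*x"
    by (simp_all add: algebra_simps)
  have "sinh (real (2 * Suc k + 3) * x) = 2*cosh (2*x) * sinh (real (2*k+3)*x) - sinh (real (2*k+1)*x)"
    unfolding e by (simp add: sinh_add sinh_diff)
  with Suc show ?case by (simp add: algebra_simps)
qed

lemma cosh_odd_Ch: "cosh (real (2*k+1) * x) = cosh x * Ch k (cosh (2*x)) 1 \<and>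
   cosh (real (2*k+3) * x) = cosh x * Ch (Suc k) (cosh (2*x)) 1"
proof (induction k)
  case 0
  have e: "3*x = x + 2*x" "x - 2*x = -x" by simp_all
  have h: "cosh (y+z) = 2*cosh z * cosh y - cosh (y - z)" for y z :: real
    by (simp add: cosh_add cosh_diff)
  show ?case using h[of x "2*x"] by (simp add: algebra_simps)
next
  case (Suc k)
  have e: "real (2 * Suc k + 3) * x = real (2*k+3)*x + 2*x" "real (2*k+1)*x = real (2*k+3)*x - 2*x"
    by (simp_all add: algebra_simps)
  have "cosh (real (2 * Suc k + 3) * x) = 2*cosh (2*x) * cosh (real (2*k+3)*x) - cosh (real (2*k+1)*x)"
    unfolding e by (simp add: cosh_add cosh_diff)
  with Suc show ?case by (simp add: algebra_simps)
qed

definition Xr :: "nat \<Rightarrow> nat \<Rightarrow> real \<Rightarrow> real \<Rightarrow> real" where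
  "Xr k l a t = Ch k (1-2*t) 1 * Ch l (1+2*t/a) 1"
definition Yr :: "nat \<Rightarrow> nat \<Rightarrow> real \<Rightarrow> real \<Rightarrow> real" where
  "Yr k l a t = Sh k (1-2*t) 1 * Sh l (1+2*t/a) 1"

lemma aux4: "(p::real) * q = r \<Longrightarrow> (p * A) * (q * B) = r * (A * B)"
proof -
  assume "p * q = r"
  have "(p * A) * (q * B) = (p * q) * (A * B)" by (simp only: mult_ac)
  then show ?thesis using \<open>p * q = r\<close> by simp
qed

lemma sin_n: "sin (real (2*k+1) * x) = sin x * Sh k (cos (2*x)) 1" using sin_odd_Sh by blast
lemma cos_n: "cos (real (2*k+1) * x) = cos x * Ch k (cos (2*x)) 1" using cos_odd_Ch by blast
lemma sinh_n: "sinh (real (2*k+1) * x) = sinh x * Sh k (cosh (2*x)) 1" using sinh_odd_Sh by blast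
lemma cosh_n: "cosh (real (2*k+1) * x) = cosh x * Ch k (cosh (2*x)) 1" using cosh_odd_Ch by blast

lemma asin_facts: assumes "0 \<le> s" "s \<le> 1"
  shows "sin (arcsin (sqrt s)) = sqrt s" "cos (arcsin (sqrt s)) = sqrt (1 - s)"
        "cos (2 * arcsin (sqrt s)) = 1 - 2 * s"
proof -
  have "sqrt s \<le> 1" "0 \<le> sqrt s" using assms by simp_all
  then show 1: "sin (arcsin (sqrt s)) = sqrt s" by (intro sin_arcsin) linarith+
  have "-1 \<le> sqrt s" using \<open>0 \<le> sqrt s\<close> by linarith
  then show "cos (arcsin (sqrt s)) = sqrt (1 - s)" using assms \<open>sqrt s \<le> 1\<close>
    by (subst cos_arcsin) auto
  show "cos (2 * arcsin (sqrt s)) = 1 - 2 * s" using assms by (simp add: cos_double_sin 1)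
qed

lemma asinh_facts: assumes "0 \<le> s"
  shows "sinh (arsinh (sqrt s)) = sqrt s" "cosh (arsinh (sqrt s)) = sqrt (1 + s)"
        "cosh (2 * arsinh (sqrt s)) = 1 + 2 * s"
proof -
  show 1: "sinh (arsinh (sqrt s)) = sqrt s" by simp
  show "cosh (arsinh (sqrt s)) = sqrt (1 + s)" using assms by (simp add: cosh_arsinh_real add.commute)
  show "cosh (2 * arsinh (sqrt s)) = 1 + 2 * s"
    using assms by (simp add: cosh_double_cosh cosh_arsinh_real)
qed

context
  fixes k l :: nat and a t :: real
  assumes a: "a > 0" and t: "-a \<le> t" "t \<le> 1"
begin

lemma SS_eq: "SS (2*k+1) (2*l+1) a t = t / sqrt a * Yr k l a t"
proof (cases "0 \<le> t")
  case True
  have ta: "0 \<le> t/a" using True a by simp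
  have "SS (2*k+1) (2*l+1) a t = (sqrt t * Sh k (1-2*t) 1) * (sqrt (t/a) * Sh l (1+2*t/a) 1)"
    unfolding SS_def using True t ta
    by (simp only: if_True sin_n sinh_n asin_facts asinh_facts) simp
  also have "\<dots> = t / sqrt a * Yr k l a t" unfolding Yr_def
    by (rule aux4) (use True a in \<open>simp add: real_sqrt_divide real_sqrt_mult[symmetric]\<close>)
  finally show ?thesis .
next
  case False
  have ta: "0 \<le> -t/a" "-t/a \<le> 1" using False a t by (auto simp: field_simps)
  have "SS (2*k+1) (2*l+1) a t = - ((sqrt (-t) * Sh k (1-2*t) 1) * (sqrt (-t/a) * Sh l (1+2*t/a) 1))"
    unfolding SS_def using False ta
    by (simp only: if_False sin_n sinh_n asin_facts asinh_facts) (simp add: diff_divide_distrib)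
  also have e: "sqrt (-t) * sqrt (-t/a) = -t / sqrt a"
    using False a by (simp add: real_sqrt_divide real_sqrt_mult[symmetric])
  have "- ((sqrt (-t) * Sh k (1-2*t) 1) * (sqrt (-t/a) * Sh l (1+2*t/a) 1)) = - (-t / sqrt a * Yr k l a t)"
    unfolding Yr_def using aux4[OF e] by simp
  finally show ?thesis by simp
qed

lemma CC_eq: "CC (2*k+1) (2*l+1) a t = sqrt ((1-t)*(1+t/a)) * Xr k l a t"
proof (cases "0 \<le> t")
  case True
  have ta: "0 \<le> t/a" using True a by simp
  have "CC (2*k+1) (2*l+1) a t = (sqrt (1-t) * Ch k (1-2*t) 1) * (sqrt (1+t/a) * Ch l (1+2*t/a) 1)"
    unfolding CC_def using True t ta
    by (simp only: if_True cos_n cosh_n asin_facts asinh_facts) simp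
  also have e: "sqrt (1-t) * sqrt (1+t/a) = sqrt ((1-t)*(1+t/a))"
    by (simp add: real_sqrt_mult)
  have "(sqrt (1-t) * Ch k (1-2*t) 1) * (sqrt (1+t/a) * Ch l (1+2*t/a) 1) = sqrt ((1-t)*(1+t/a)) * Xr k l a t"
    unfolding Xr_def using aux4[OF e] by simp
  finally show ?thesis .
next
  case False
  have ta: "0 \<le> -t/a" "-t/a \<le> 1" using False a t by (auto simp: field_simps)
  have "CC (2*k+1) (2*l+1) a t = (sqrt (1-t) * Ch k (1-2*t) 1) * (sqrt (1+t/a) * Ch l (1+2*t/a) 1)"
    unfolding CC_def using False ta
    by (simp only: if_False cos_n cosh_n asin_facts asinh_facts) (simp add: diff_divide_distrib)
  also have e: "sqrt (1-t) * sqrt (1+t/a) = sqrt ((1-t)*(1+t/a))"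
    by (simp add: real_sqrt_mult)
  have "(sqrt (1-t) * Ch k (1-2*t) 1) * (sqrt (1+t/a) * Ch l (1+2*t/a) 1) = sqrt ((1-t)*(1+t/a)) * Xr k l a t"
    unfolding Xr_def using aux4[OF e] by simp
  finally show ?thesis .
qed

lemma rho_eq: "rho n m a t = 2 * ((CC n m a t)^2 + (SS n m a t)^2)"
proof (cases "0 \<le> t")
  case True
  define A where "A = real n * arcsin (sqrt t)"
  define B where "B = real m * arsinh (sqrt (t/a))"
  have "rho n m a t = cos (2*A) + cosh (2*B)" unfolding rho_def A_def B_def using True
    by (simp add: mult.assoc)
  also have "\<dots> = 2 * ((cos A * cosh B)^2 + (sin A * sinh B)^2)"
  proof -
    have "cos (2*A) = 2 * cos A ^ 2 - 1" by (rule cos_double_cos)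
    moreover have "cosh (2*B) = 2 * cosh B ^ 2 - 1" by (rule cosh_double_cosh)
    moreover have "cosh B ^ 2 = sinh B ^ 2 + 1" by (rule cosh_square_eq)
    moreover have "(cos A * cosh B)^2 = cos A^2 + cos A^2 * sinh B^2"
      using cosh_square_eq[of B] by (simp add: power_mult_distrib algebra_simps)
    moreover have "(sin A * sinh B)^2 = sinh B^2 - cos A^2 * sinh B^2"
    proof -
      have "(sin A * sinh B)^2 = sin A^2 * sinh B^2" by (simp add: power_mult_distrib)
      also have "\<dots> = (1 - cos A^2) * sinh B^2" by (simp add: sin_squared_eq)
      finally show ?thesis by (simp add: algebra_simps)
    qed
    ultimately show ?thesis by (smt (verit))
  qed
  also have "\<dots> = 2 * ((CC n m a t)^2 + (SS n m a t)^2)"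
    unfolding CC_def SS_def A_def B_def using True by simp
  finally show ?thesis .
next
  case False
  define A where "A = real n * arsinh (sqrt (-t))"
  define B where "B = real m * arcsin (sqrt (-t/a))"
  have "rho n m a t = cosh (2*A) + cos (2*B)" unfolding rho_def A_def B_def using False
    by (simp add: mult.assoc)
  also have "\<dots> = 2 * ((cosh A * cos B)^2 + (sinh A * sin B)^2)"
  proof -
    have "cos (2*B) = 2 * cos B ^ 2 - 1" by (rule cos_double_cos)
    moreover have "cosh (2*A) = 2 * cosh A ^ 2 - 1" by (rule cosh_double_cosh)
    moreover have "(cosh A * cos B)^2 = cos B^2 + cos B^2 * sinh A^2"
      using cosh_square_eq[of A] by (simp add: power_mult_distrib algebra_simps)
    moreover have "(sinh A * sin B)^2 = sinh A^2 - cos B^2 * sinh A^2"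
    proof -
      have "(sinh A * sin B)^2 = sin B^2 * sinh A^2" by (simp add: power_mult_distrib)
      also have "\<dots> = (1 - cos B^2) * sinh A^2" by (simp add: sin_squared_eq)
      finally show ?thesis by (simp add: algebra_simps)
    qed
    moreover have "cosh A ^ 2 = sinh A ^ 2 + 1" by (rule cosh_square_eq)
    ultimately show ?thesis by (smt (verit))
  qed
  also have "\<dots> = 2 * ((CC n m a t)^2 + (SS n m a t)^2)"
    unfolding CC_def SS_def A_def B_def using False by simp
  finally show ?thesis .
qed

lemma rho_pos: "rho n m a t > 0" if "n > 0" "m > 0"
proof (cases "0 \<le> t")
  case True
  show ?thesis
  proof (cases "t = 0")
    case True then show ?thesis by (simp add: rho_def)
  next
    case False
    then have "t/a > 0" using True a by simp
    then have "2 * real m * arsinh (sqrt (t/a)) \<noteq> 0" using that a False by simp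
    then have "cosh (2 * real m * arsinh (sqrt (t/a))) > 1"
      using cosh_real_ge_1 cosh_real_one_iff by (metis order_le_less)
    moreover have "cos (2 * real n * arcsin (sqrt t)) \<ge> -1" by simp
    moreover have "rho n m a t = cos (2 * real n * arcsin (sqrt t)) + cosh (2 * real m * arsinh (sqrt (t / a)))"
      by (simp add: rho_def True)
    ultimately show ?thesis by linarith
  qed
next
  case False
  then have "2 * real n * arsinh (sqrt (-t)) \<noteq> 0" using that by simp
  then have "cosh (2 * real n * arsinh (sqrt (-t))) > 1"
    using cosh_real_ge_1 cosh_real_one_iff by (metis order_le_less)
  moreover have "cos (2 * real m * arcsin (sqrt (-t/a))) \<ge> -1" by simp
  moreover have "rho n m a t = cosh (2 * real n * arsinh (sqrt (-t))) + cos (2 * real m * arcsin (sqrt (-t/a)))"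
    by (simp add: rho_def False)
  ultimately show ?thesis by linarith
qed

end

definition tauf :: "real \<Rightarrow> complex \<Rightarrow> complex" where
  "tauf a w = of_real ((1-a)/2) * w + of_real ((1+a)/2) * (w^2 + 1) / 2"
definition Xc :: "nat \<Rightarrow> nat \<Rightarrow> real \<Rightarrow> complex \<Rightarrow> complex" where
  "Xc k l a t = Ch k (1 - 2 * t) 1 * Ch l (1 + 2 * t / of_real a) 1"
definition Yc :: "nat \<Rightarrow> nat \<Rightarrow> real \<Rightarrow> complex \<Rightarrow> complex" where
  "Yc k l a t = Sh k (1 - 2 * t) 1 * Sh l (1 + 2 * t / of_real a) 1"
definition Qf :: "nat \<Rightarrow> nat \<Rightarrow> real \<Rightarrow> complex \<Rightarrow> complex" where
  "Qf k l a w = tauf a w * Sh k (w - 2 * tauf a w) w * Sh l (w + 2 * tauf a w / of_real a) w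
     + of_real ((1+a)/2) / 2 * (1 - w^2) * Ch k (w - 2 * tauf a w) w * Ch l (w + 2 * tauf a w / of_real a) w"

lemma Qf_eq:
  assumes "w \<noteq> 0" "a \<noteq> 0"
  shows "Qf k l a w = w^(k+l+1) * ((tauf a w / w) * Yc k l a (tauf a w / w)
           + (of_real ((1+a)/2) * (1/w - w) / 2) * Xc k l a (tauf a w / w))"
proof -
  define t where "t = tauf a w / w"
  define \<sigma> where "\<sigma> = of_real ((1+a)/2) * (1/w - w) / 2"
  have tw: "tauf a w = t * w" using assms unfolding t_def by simp
  have e1: "w - 2 * tauf a w = (1 - 2*t) * w" unfolding tw by (simp add: algebra_simps)
  have e2: "w + 2 * tauf a w / of_real a = (1 + 2*t/of_real a) * w" unfolding tw
    by (simp add: algebra_simps)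
  have e3: "of_real ((1+a)/2) / 2 * (1 - w^2) = \<sigma> * w"
    using assms unfolding \<sigma>_def by (simp add: field_simps power2_eq_square)
  have "Qf k l a w = (t * w) * (w^k * Sh k (1 - 2*t) 1) * (w^l * Sh l (1 + 2*t/of_real a) 1)
     + (\<sigma> * w) * (w^k * Ch k (1 - 2*t) 1) * (w^l * Ch l (1 + 2*t/of_real a) 1)"
    unfolding Qf_def e1 e2 e3 Sh_hom Ch_hom unfolding tw ..
  also have "\<dots> = w^(k+l+1) * (t * Yc k l a t + \<sigma> * Xc k l a t)"
    unfolding Yc_def Xc_def by (simp add: algebra_simps power_add)
  finally show ?thesis unfolding t_def \<sigma>_def .
qed

lemma Sh_zero': "Sh k u 0 = (2*u)^k" by (rule Sh_zero)

lemma opa: "(a::real) > 0 \<Longrightarrow> 1 + complex_of_real a \<noteq> 0"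
proof
  assume "a > 0" "1 + complex_of_real a = 0"
  then have "Re (1 + complex_of_real a) = 0" by simp
  then show False using \<open>a > 0\<close> by simp
qed

lemma Qf_0: assumes "a > 0" shows "Qf k l a 0 \<noteq> 0"
proof -
  have t0: "tauf a 0 = of_real ((1+a)/2) / 2" by (simp add: tauf_def)
  have t1: "of_real ((1+a)/2) / 2 * (1 - 0^2) = tauf a 0" by (simp add: t0)
  have "Qf k l a 0 = 2 * tauf a 0 * (2 * (0 - 2 * tauf a 0))^k * (2 * (0 + 2 * tauf a 0 / of_real a))^l"
    unfolding Qf_def Sh_zero Ch_zero t1 by (simp add: algebra_simps)
  moreover have "tauf a 0 \<noteq> 0" using assms opa[OF assms] by (simp add: t0)
  ultimately show ?thesis using assms opa[OF assms] by simp
qed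

lemma real_key:
  fixes x1 x2 y1 y2 a :: real
  assumes "x1 > 0" "x2 > 0" "a > 0" "x2 * y2 = - a * x1 * y1" "a * (x1^2 - y1^2) + x2^2 - y2^2 > 0"
  shows "x1 * x2 + y1 * y2 > 0"
proof (rule ccontr)
  assume c: "\<not> x1 * x2 + y1 * y2 > 0"
  have y2: "y2 = - a * x1 * y1 / x2" using assms(2,4) by (simp add: field_simps)
  have "x1 * x2 * x2 \<le> a * x1 * y1^2"
  proof -
    have "x1 * x2 \<le> - y1 * y2" using c by linarith
    then have "x1 * x2 * x2 \<le> - y1 * y2 * x2" using assms(2) by (intro mult_right_mono) auto
    also have "\<dots> = - y1 * (x2 * y2)" by (simp only: mult_ac)
    also have "\<dots> = a * x1 * y1^2" using assms(4) by (simp add: algebra_simps power2_eq_square)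
    finally show ?thesis .
  qed
  then have h: "x2^2 \<le> a * y1^2" using assms(1) by (simp add: power2_eq_square mult.assoc mult_le_cancel_left_pos)
  have "y2^2 * x2^2 = a^2 * x1^2 * y1^2" using assms(4)
    by (metis power_mult_distrib mult_minus_left power2_minus mult.commute)
  have "a * x1^2 * x2^2 \<le> a * x1^2 * (a * y1^2)" using h assms(1,3) by (intro mult_left_mono) auto
  also have "\<dots> = y2^2 * x2^2" using \<open>y2^2 * x2^2 = a^2 * x1^2 * y1^2\<close> by (simp add: power2_eq_square)
  finally have "a * x1^2 \<le> y2^2" using assms(2) by (simp add: mult_le_cancel_right_pos)
  moreover have "a * (x1^2 - y1^2) = a * x1^2 - a * y1^2" by (simp add: algebra_simps)
  ultimately show False using h assms(5) by linarith
qed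

lemma csqrt_Re_pos: assumes "\<not> (Im z = 0 \<and> Re z \<le> 0)" shows "Re (csqrt z) > 0"
proof (rule ccontr)
  assume "\<not> Re (csqrt z) > 0"
  then have r: "Re (csqrt z) = 0" using Re_csqrt[of z] by linarith
  define b where "b = Im (csqrt z)"
  have cb: "csqrt z = complex_of_real b * \<i>" using r unfolding b_def by (simp add: complex_eq_iff)
  have "z = (csqrt z)^2" by simp
  also have "\<dots> = - complex_of_real (b^2)" unfolding cb by (simp add: power_mult_distrib)
  finally have "z = - complex_of_real (b^2)" .
  then show False using assms by auto
qed

lemma norm_q_lt: fixes s :: complex assumes "Re s > 0" shows "norm ((s-1)/(s+1)) < 1"
proof -
  have ne: "s + 1 \<noteq> 0" using assms by (auto simp: complex_eq_iff)
  have e1: "(cmod (s-1))^2 = (Re s - 1)^2 + (Im s)^2" by (simp add: cmod_power2)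
  have e2: "(cmod (s+1))^2 = (Re s + 1)^2 + (Im s)^2" by (simp add: cmod_power2)
  have "(Re s - 1)^2 < (Re s + 1)^2" using assms by (simp add: power2_eq_square algebra_simps)
  then have "(cmod (s-1))^2 < (cmod (s+1))^2" unfolding e1 e2 by simp
  then have "cmod (s-1) < cmod (s+1)" by (simp add: power_less_imp_less_base)
  then show ?thesis using ne by (simp add: norm_divide divide_less_eq)
qed

lemma q_rel: fixes s :: complex assumes p: "s + 1 \<noteq> 0" and m: "s - 1 \<noteq> 0"
  shows "2 * (((s^2+1)/(s^2-1)) * ((s-1)/(s+1))) = ((s-1)/(s+1))^2 + 1"
proof -
  have d: "s^2 - 1 = (s-1)*(s+1)" by (simp add: algebra_simps power2_eq_square)
  have "((s^2+1)/(s^2-1)) * ((s-1)/(s+1)) = (s^2+1)/((s+1)*(s+1))"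
    unfolding d using p m by (simp add: divide_simps)
  moreover have "((s-1)/(s+1))^2 + 1 = (2*(s^2+1))/((s+1)*(s+1))"
    using p by (simp add: divide_simps power2_eq_square) (simp add: algebra_simps)
  ultimately show ?thesis by simp
qed

lemma Sh_q': assumes "2 * (x * q) = q^2 + 1"
  shows "q^k * (q - 1) * Sh k x 1 = q^(2*k+1) - 1"
  using Sh_q[OF assms, of k] unfolding Sh_hom by (simp add: mult_ac)
lemma Ch_q': assumes "2 * (x * q) = q^2 + 1"
  shows "q^k * (q + 1) * Ch k x 1 = q^(2*k+1) + 1"
  using Ch_q[OF assms, of k] unfolding Ch_hom by (simp add: mult_ac)

lemma core_q:
  fixes s1 s2 :: complex
  assumes "Re s1 > 0" "Re s2 > 0" "s1 - 1 \<noteq> 0" "s2 - 1 \<noteq> 0"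
    and x1: "x1 = (s1^2+1)/(s1^2-1)" and x2: "x2 = (s2^2+1)/(s2^2-1)"
  shows "Sh k x1 1 * Sh l x2 1 + s1 * s2 * (Ch k x1 1 * Ch l x2 1) \<noteq> 0"
proof
  assume z: "Sh k x1 1 * Sh l x2 1 + s1 * s2 * (Ch k x1 1 * Ch l x2 1) = 0"
  define q1 where "q1 = (s1-1)/(s1+1)"
  define q2 where "q2 = (s2-1)/(s2+1)"
  have p1: "s1 + 1 \<noteq> 0" using assms(1) by (auto simp: complex_eq_iff)
  have p2: "s2 + 1 \<noteq> 0" using assms(2) by (auto simp: complex_eq_iff)
  have r1: "2 * (x1 * q1) = q1^2 + 1" unfolding x1 q1_def by (rule q_rel[OF p1 assms(3)])
  have r2: "2 * (x2 * q2) = q2^2 + 1" unfolding x2 q2_def by (rule q_rel[OF p2 assms(4)])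
  have sq1: "s1 * (q1 - 1) = - (q1 + 1)" unfolding q1_def using p1 by (simp add: field_simps)
  have sq2: "s2 * (q2 - 1) = - (q2 + 1)" unfolding q2_def using p2 by (simp add: field_simps)
  have "s1 \<noteq> 0" "s2 \<noteq> 0" using assms(1,2) by auto
  have "q1 + 1 = 2 * s1 / (s1 + 1)" unfolding q1_def using p1 by (simp add: field_simps)
  then have nq1: "q1 + 1 \<noteq> 0" using p1 \<open>s1 \<noteq> 0\<close> by simp
  have "q2 + 1 = 2 * s2 / (s2 + 1)" unfolding q2_def using p2 by (simp add: field_simps)
  then have nq2: "q2 + 1 \<noteq> 0" using p2 \<open>s2 \<noteq> 0\<close> by simp
  have A1: "q1^k * (q1 - 1) * Sh k x1 1 = q1^(2*k+1) - 1" by (rule Sh_q'[OF r1])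
  have A2: "q2^l * (q2 - 1) * Sh l x2 1 = q2^(2*l+1) - 1" by (rule Sh_q'[OF r2])
  have B1: "q1^k * (q1 + 1) * Ch k x1 1 = q1^(2*k+1) + 1" by (rule Ch_q'[OF r1])
  have B2: "q2^l * (q2 + 1) * Ch l x2 1 = q2^(2*l+1) + 1" by (rule Ch_q'[OF r2])
  define P where "P = q1^k * q2^l * (q1 - 1) * (q2 - 1) * (q1 + 1) * (q2 + 1)"
  have "0 = P * (Sh k x1 1 * Sh l x2 1 + s1 * s2 * (Ch k x1 1 * Ch l x2 1))" using z by simp
  also have "\<dots> = (q1^k * (q1 - 1) * Sh k x1 1) * (q2^l * (q2 - 1) * Sh l x2 1) * (q1 + 1) * (q2 + 1)
     + (s1 * (q1 - 1)) * (s2 * (q2 - 1)) * (q1^k * (q1 + 1) * Ch k x1 1) * (q2^l * (q2 + 1) * Ch l x2 1)"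
    unfolding P_def by (simp add: algebra_simps)
  also have "\<dots> = (q1 + 1) * (q2 + 1) * (2 * (q1^(2*k+1) * q2^(2*l+1) + 1))"
    unfolding A1 A2 B1 B2 sq1 sq2 by (simp add: algebra_simps)
  finally have "(q1 + 1) * (q2 + 1) * (2 * (q1^(2*k+1) * q2^(2*l+1) + 1)) = 0" by simp
  moreover define Qp where "Qp = q1^(2*k+1) * q2^(2*l+1)"
  ultimately have "(q1 + 1) * (q2 + 1) * (2 * (Qp + 1)) = 0" by simp
  then have "Qp + 1 = 0" using nq1 nq2 by (simp only: mult_eq_0_iff) simp
  then have "q1^(2*k+1) * q2^(2*l+1) = -1" unfolding Qp_def by (simp add: add_eq_0_iff2)
  then have "norm (q1^(2*k+1) * q2^(2*l+1)) = 1" by simp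
  then have e: "norm q1 ^ (2*k+1) * norm q2 ^ (2*l+1) = 1" by (simp only: norm_mult norm_power)
  have "norm q1 < 1" unfolding q1_def by (rule norm_q_lt[OF assms(1)])
  then have h1: "norm q1 ^ (2*k+1) < 1" using power_less_one_iff[of "norm q1" "2*k+1"] by simp
  have "norm q2 < 1" unfolding q2_def by (rule norm_q_lt[OF assms(2)])
  then have h2: "norm q2 ^ (2*l+1) \<le> 1" using power_le_one[of "norm q2" "2*l+1"] by simp
  have "norm q1 ^ (2*k+1) * norm q2 ^ (2*l+1) \<le> norm q1 ^ (2*k+1)"
    using h2 by (simp add: mult_left_le)
  then show False using e h1 by linarith
qed

lemma tauf_div: "w \<noteq> 0 \<Longrightarrow> tauf a w / w = of_real ((1-a)/2) + of_real ((1+a)/2) * (w + 1/w) / 2"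
  unfolding tauf_def by (simp add: field_simps power2_eq_square)

lemma toff:
  assumes a: "a > 0" and w: "w \<noteq> 0" "norm w < 1" and it: "Im (tauf a w / w) = 0"
  shows "Re (tauf a w / w) > 1 \<or> Re (tauf a w / w) < -a"
proof -
  define x where "x = Re w"
  define y where "y = Im w"
  define N where "N = x^2 + y^2"
  have N: "N = (cmod w)^2" unfolding N_def x_def y_def by (simp add: cmod_power2)
  have Np: "N > 0" using w unfolding N by simp
  have N1: "N < 1" using w unfolding N by (simp add: power_less_one_iff abs_square_less_1)
  have iw: "Im (1/w) = - y / N" "Re (1/w) = x / N"
    unfolding N_def x_def y_def by (simp_all add: Im_divide Re_divide)
  have "Im (tauf a w / w) = (1+a)/4 * (y - y / N)"
    unfolding tauf_div[OF w(1)] using iw by (simp add: y_def)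
  then have "y - y/N = 0" using it a by simp
  then have "y * (1 - 1/N) = 0" by (simp add: algebra_simps)
  moreover have "1/N > 1" using Np N1 by simp
  ultimately have y0: "y = 0" using N1 by auto
  then have x2: "x^2 < 1" "x \<noteq> 0" using N1 Np unfolding N_def by simp_all
  define Z where "Z = (1+a)/4 * (x + 1/x)"
  have re: "Re (tauf a w / w) = (1-a)/2 + Z"
    unfolding tauf_div[OF w(1)] Z_def using iw y0 by (simp add: x_def N_def power2_eq_square)
  show ?thesis
  proof (cases "x > 0")
    case True
    have "\<bar>x\<bar> < 1" using x2 by (simp add: abs_square_less_1)
    then have "x < 1" by simp
    have "x + 1/x - 2 = (1-x)^2/x" using True by (simp add: field_simps power2_eq_square algebra_simps)
    moreover have "(1-x)^2/x > 0" using True \<open>x < 1\<close> by simp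
    ultimately have "x + 1/x > 2" by linarith
    then have "(1+a)/4 * (x + 1/x) > (1+a)/4 * 2" using a by (intro mult_strict_left_mono) auto
    moreover have "(1+a)/4 * 2 = (1+a)/2" by simp
    ultimately have "Z > (1+a)/2" unfolding Z_def by linarith
    then show ?thesis unfolding re by (intro disjI1) (simp add: field_simps)
  next
    case False
    then have xn: "x < 0" using x2 by simp
    have "\<bar>x\<bar> < 1" using x2 by (simp add: abs_square_less_1)
    then have "x > -1" by simp
    have "x + 1/x + 2 = (1+x)^2/x" using xn by (simp add: field_simps power2_eq_square algebra_simps)
    moreover have "(1+x)^2/x < 0" using xn \<open>x > -1\<close> by (simp add: divide_pos_neg)
    ultimately have "x + 1/x < -2" by linarith
    then have "(1+a)/4 * (x + 1/x) < (1+a)/4 * (-2)" using a by (intro mult_strict_left_mono) auto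
    moreover have "(1+a)/4 * (-2) = -(1+a)/2" by (simp add: field_simps)
    ultimately have "Z < -(1+a)/2" unfolding Z_def by linarith
    then show ?thesis unfolding re by (intro disjI2) (simp add: field_simps)
  qed
qed

lemma cut_conds:
  assumes a: "a > 0" and h: "Im t \<noteq> 0 \<or> Re t > 1 \<or> Re t < -a"
  shows "t \<noteq> 0" "Re (csqrt ((t-1)/t)) > 0" "Re (csqrt ((t + of_real a)/t)) > 0"
proof -
  show t0: "t \<noteq> 0" using h a by auto
  have "\<not> (Im ((t-1)/t) = 0 \<and> Re ((t-1)/t) \<le> 0) \<and> \<not> (Im ((t + of_real a)/t) = 0 \<and> Re ((t + of_real a)/t) \<le> 0)"
  proof (cases "Im t = 0")
    case False
    have N: "(Re t)^2 + (Im t)^2 > 0" using False by (simp add: sum_power2_gt_zero_iff)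
    have "Im ((t-1)/t) = Im t / ((Re t)^2 + (Im t)^2)" by (simp add: Im_divide algebra_simps)
    moreover have "Im ((t + of_real a)/t) = - a * Im t / ((Re t)^2 + (Im t)^2)" by (simp add: Im_divide algebra_simps)
    ultimately show ?thesis using False N a by auto
  next
    case True
    define r where "r = Re t"
    have tr: "t = of_real r" using True unfolding r_def by (simp add: complex_eq_iff)
    have r: "r > 1 \<or> r < -a" using h True unfolding r_def by simp
    have "(r-1)/r > 0" using r a by (auto simp: divide_pos_pos divide_neg_neg)
    moreover have "(r+a)/r > 0" using r a by (auto simp: divide_pos_pos divide_neg_neg)
    moreover have "(t-1)/t = of_real ((r-1)/r)" "(t + of_real a)/t = of_real ((r+a)/r)" unfolding tr by simp_all
    ultimately show ?thesis by simp
  qed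
  then have c1: "\<not> (Im ((t-1)/t) = 0 \<and> Re ((t-1)/t) \<le> 0)"
    and c2: "\<not> (Im ((t + of_real a)/t) = 0 \<and> Re ((t + of_real a)/t) \<le> 0)" by blast+
  show "Re (csqrt ((t-1)/t)) > 0" by (rule csqrt_Re_pos[OF c1])
  show "Re (csqrt ((t + of_real a)/t)) > 0" by (rule csqrt_Re_pos[OF c2])
qed

lemma ident:
  fixes s1 s2 t w :: complex
  assumes a: "a > 0" and w: "w \<noteq> 0" "norm w < 1" and tdef: "t = tauf a w / w" and t0: "t \<noteq> 0"
    and s1: "s1^2 = (t-1)/t" and s2: "s2^2 = (t + of_real a)/t"
    and r1: "Re s1 > 0" and r2: "Re s2 > 0"
  shows "of_real ((1+a)/2) * (1/w - w) / 2 = t * s1 * s2"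
proof -
  have ca: "1 + complex_of_real a \<noteq> 0" by (rule opa[OF a])
  have rel: "s2^2 + of_real a * s1^2 = 1 + of_real a"
    unfolding s1 s2 using t0 by (simp add: field_simps)
  have "Re (s2^2 + of_real a * s1^2) = 1 + a" "Im (s2^2 + of_real a * s1^2) = 0"
    unfolding rel by simp_all
  then have re: "(Re s2)^2 - (Im s2)^2 + a * ((Re s1)^2 - (Im s1)^2) = 1 + a"
    and im: "2 * Re s2 * Im s2 + a * (2 * Re s1 * Im s1) = 0"
    by (simp_all add: Re_power2 Im_power2)
  have key: "Re s1 * Re s2 + Im s1 * Im s2 > 0"
  proof (rule real_key[OF r1 r2 a])
    show "Re s2 * Im s2 = - a * Re s1 * Im s1" using im by (simp add: algebra_simps)
    show "a * ((Re s1)^2 - (Im s1)^2) + (Re s2)^2 - (Im s2)^2 > 0" using re a by simp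
  qed
  define D where "D = s2 + s1"
  define E where "E = s2 - s1"
  have D0: "D \<noteq> 0" unfolding D_def using r1 r2 by (auto simp: complex_eq_iff)
  have E0: "E \<noteq> 0"
  proof
    assume "E = 0"
    then have "s2^2 = s1^2" unfolding E_def by simp
    then have "(t + of_real a)/t = (t-1)/t" using s1 s2 by simp
    then have "t + of_real a = t - 1" using t0 by (simp add: divide_cancel_right)
    then have "Re (t + of_real a) = Re (t - 1)" by simp
    then show False using a by simp
  qed
  define w' where "w' = E / D"
  have w'0: "w' \<noteq> 0" unfolding w'_def using D0 E0 by simp
  have "(cmod E)^2 < (cmod D)^2"
    unfolding cmod_power2 D_def E_def using key by (simp add: power2_eq_square algebra_simps)
  then have "cmod E < cmod D" by (simp add: power_less_imp_less_base)
  then have w'1: "norm w' < 1" unfolding w'_def using D0 by (simp add: norm_divide divide_less_eq)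
  have DE: "D * E = s2^2 - s1^2" "E^2 + D^2 = 2 * (s1^2 + s2^2)" "D^2 - E^2 = 4 * s1 * s2"
    unfolding D_def E_def by (simp_all add: algebra_simps power2_eq_square)
  have dd: "s2^2 - s1^2 = (1 + of_real a) / t" "s1^2 + s2^2 = (2*t + of_real a - 1)/t"
    unfolding s1 s2 using t0 by (simp_all add: field_simps)
  have "t * (1 + of_real a) \<noteq> 0" using t0 ca by simp
  then have ta: "t + t * of_real a \<noteq> 0" by (simp add: algebra_simps)
  have "w' + 1/w' = (E^2 + D^2) / (D * E)" unfolding w'_def using D0 E0
    by (simp add: field_simps power2_eq_square)
  also have "\<dots> = 2 * (2*t + of_real a - 1) / (1 + of_real a)"
    unfolding DE dd using t0 ca ta by (simp add: field_simps)
  finally have ww': "w' + 1/w' = 2 * (2*t + of_real a - 1) / (1 + of_real a)" .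
  have ca4: "4 + of_real a * 4 \<noteq> (0::complex)"
  proof
    assume "4 + of_real a * 4 = (0::complex)"
    then have "Re (4 + of_real a * 4) = 0" by simp
    then show False using a by simp
  qed
  have "tauf a w' / w' = t"
    unfolding tauf_div[OF w'0] ww' using ca ca4 by (simp add: field_simps)
  then have "tauf a w / w = tauf a w' / w'" using tdef by simp
  then have "of_real ((1+a)/2) * (w + 1/w) = of_real ((1+a)/2) * (w' + 1/w')"
    unfolding tauf_div[OF w(1)] tauf_div[OF w'0] by simp
  moreover have "complex_of_real ((1+a)/2) \<noteq> 0" using ca by simp
  ultimately have "w + 1/w = w' + 1/w'" by simp
  then have "(w - w') * (w * w' - 1) = 0" using w(1) w'0 by (simp add: field_simps)
  moreover have "w * w' \<noteq> 1"
  proof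
    assume "w * w' = 1"
    then have "norm (w * w') = 1" by simp
    moreover have "norm (w * w') < 1"
    proof -
      have "norm w * norm w' \<le> 1 * norm w'" by (rule mult_right_mono) (use w(2) in auto)
      then show ?thesis using w'1 by (simp add: norm_mult)
    qed
    ultimately show False by simp
  qed
  ultimately have "w = w'" by simp
  have "1/w' - w' = (D^2 - E^2) / (D * E)" unfolding w'_def using D0 E0
    by (simp add: field_simps power2_eq_square)
  also have "\<dots> = 4 * s1 * s2 * t / (1 + of_real a)"
    unfolding DE dd using t0 ca by (simp add: field_simps)
  finally show ?thesis unfolding \<open>w = w'\<close> using ca by (simp add: field_simps)
qed

lemma stab_inner:
  assumes a: "a > 0" and w: "w \<noteq> 0" "norm w < 1"
  shows "Qf k l a w \<noteq> 0"
proof -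
  define t where "t = tauf a w / w"
  have h: "Im t \<noteq> 0 \<or> Re t > 1 \<or> Re t < -a" using toff[OF a w] unfolding t_def by blast
  note cc = cut_conds[OF a h]
  define s1 where "s1 = csqrt ((t-1)/t)"
  define s2 where "s2 = csqrt ((t + of_real a)/t)"
  have s1sq: "s1^2 = (t-1)/t" and s2sq: "s2^2 = (t + of_real a)/t" unfolding s1_def s2_def by simp_all
  have t0: "t \<noteq> 0" and r1: "Re s1 > 0" and r2: "Re s2 > 0" using cc unfolding s1_def s2_def by auto
  have sig: "of_real ((1+a)/2) * (1/w - w) / 2 = t * s1 * s2"
    by (rule ident[OF a w t_def t0 s1sq s2sq r1 r2])
  have x1: "1 - 2*t = (s1^2+1)/(s1^2-1)"
  proof -
    have e: "s1^2 - 1 = -1/t" "s1^2 + 1 = (2*t-1)/t" unfolding s1sq using t0 by (simp_all add: field_simps)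
    have "(s1^2+1)/(s1^2-1) = ((2*t-1)/t)/(-1/t)" by (simp only: e)
    also have "\<dots> = 1 - 2*t" using t0 by (simp add: field_simps)
    finally show ?thesis by simp
  qed
  have x2: "1 + 2*t/of_real a = (s2^2+1)/(s2^2-1)"
  proof -
    have e: "s2^2 - 1 = of_real a/t" "s2^2 + 1 = (2*t + of_real a)/t" unfolding s2sq using t0 by (simp_all add: field_simps)
    have "(s2^2+1)/(s2^2-1) = ((2*t + of_real a)/t)/(of_real a/t)" by (simp only: e)
    also have "\<dots> = 1 + 2*t/of_real a" using t0 a by (simp add: field_simps)
    finally show ?thesis by simp
  qed
  have m1: "s1 - 1 \<noteq> 0"
  proof
    assume "s1 - 1 = 0"
    then have "s1^2 = 1" by simp
    then have "(t-1)/t = 1" using s1sq by simp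
    then show False using t0 by (simp add: field_simps)
  qed
  have m2: "s2 - 1 \<noteq> 0"
  proof
    assume "s2 - 1 = 0"
    then have "s2^2 = 1" by simp
    then have "(t + of_real a)/t = 1" using s2sq by simp
    then show False using t0 a by (simp add: field_simps)
  qed
  have nz: "Yc k l a t + s1 * s2 * Xc k l a t \<noteq> 0"
    unfolding Yc_def Xc_def by (rule core_q[OF r1 r2 m1 m2 x1 x2])
  have "Qf k l a w = w^(k+l+1) * (t * Yc k l a t + (t * s1 * s2) * Xc k l a t)"
    unfolding Qf_eq[OF w(1) order.strict_implies_not_eq[OF a, symmetric]] t_def[symmetric] sig ..
  also have "\<dots> = w^(k+l+1) * t * (Yc k l a t + s1 * s2 * Xc k l a t)" by (simp add: algebra_simps)
  finally show ?thesis using w t0 nz by simp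
qed

lemma stab_open:
  assumes a: "a > 0" and w: "norm w < 1"
  shows "Qf k l a w \<noteq> 0"
  using stab_inner[OF a _ w] Qf_0[OF a] by (cases "w = 0") auto

lemma mean_value_circle:
  fixes \<Phi> :: "complex \<Rightarrow> complex"
  assumes hol: "\<Phi> holomorphic_on U" and U: "open U" "cball 0 1 \<subseteq> U"
  shows "((\<lambda>x. \<Phi> (exp (2 * of_real pi * \<i> * of_real x))) has_integral \<Phi> 0) {0..1}"
proof -
  have "\<Phi> holomorphic_on cball 0 1" by (rule holomorphic_on_subset[OF hol U(2)])
  then have "((\<lambda>u. \<Phi> u / (u - 0)) has_contour_integral (2 * of_real pi * \<i> * \<Phi> 0)) (circlepath 0 1)"
    by (rule Cauchy_integral_circlepath_simple) simp
  then have h: "((\<lambda>x. \<Phi> (circlepath 0 1 x) / (circlepath 0 1 x - 0) * vector_derivative (circlepath 0 1) (at x within {0..1}))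
      has_integral (2 * of_real pi * \<i> * \<Phi> 0)) {0..1}"
    unfolding has_contour_integral_def .
  have "((\<lambda>x. \<Phi> (exp (2 * of_real pi * \<i> * of_real x)) * (2 * of_real pi * \<i>)) has_integral (2 * of_real pi * \<i> * \<Phi> 0)) {0..1}"
  proof (rule has_integral_eq[OF _ h])
    fix x :: real assume x: "x \<in> {0..1}"
    have vd: "vector_derivative (circlepath 0 1) (at x within {0..1}) = 2 * of_real pi * \<i> * exp (2 * of_real pi * \<i> * of_real x)"
      using vector_derivative_circlepath01[of x 0 1] x by simp
    show "\<Phi> (circlepath 0 1 x) / (circlepath 0 1 x - 0) * vector_derivative (circlepath 0 1) (at x within {0..1})
        = \<Phi> (exp (2 * of_real pi * \<i> * of_real x)) * (2 * of_real pi * \<i>)"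
      unfolding vd by (simp add: circlepath)
  qed
  then have "((\<lambda>x. \<Phi> (exp (2 * of_real pi * \<i> * of_real x)) * (2 * of_real pi * \<i>) * (1 / (2 * of_real pi * \<i>)))
      has_integral (2 * of_real pi * \<i> * \<Phi> 0) * (1 / (2 * of_real pi * \<i>))) {0..1}"
    by (rule has_integral_mult_left)
  then show ?thesis by simp
qed

lemma halving:
  fixes h :: "real \<Rightarrow> real"
  assumes cont: "continuous_on {0..1} h" and sym: "\<And>x. x \<in> {0..1} \<Longrightarrow> h (1 - x) = h x"
    and I: "(h has_integral I) {0..1}"
  shows "(h has_integral (I / 2)) {0..1/2}"
proof -
  have "h integrable_on {0..1/2}"
    by (rule integrable_continuous_interval) (rule continuous_on_subset[OF cont], auto)
  then obtain J where J: "(h has_integral J) {0..1/2}" by blast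
  then have "((\<lambda>x. h (-x)) has_integral J) {-(1/2)..-0}" by (simp only: has_integral_reflect_real)
  then have "((\<lambda>x. h (-x)) has_integral J) (cbox (-(1/2)) 0)" by simp
  from has_integral_affinity'[OF this, of 1 "-1"]
  have "((\<lambda>x. h (- (x - 1))) has_integral J) (cbox (1/2) 1)" by simp
  then have "((\<lambda>x. h (- (x - 1))) has_integral J) {1/2..1}" by simp
  then have J2: "(h has_integral J) {1/2..1}"
    by (rule has_integral_eq[rotated]) (use sym in \<open>auto simp: algebra_simps\<close>)
  have "(h has_integral (J + J)) {0..1}" by (rule has_integral_combine[OF _ _ J J2]) auto
  then have "I = J + J" by (rule has_integral_unique[OF I])
  then show ?thesis using J by simp
qed

lemma fin_leb: "finite (E::real set) \<Longrightarrow> E \<in> sets lebesgue"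
  by (metis negligible_imp_sets negligible_finite)

lemma S_leb: "finite E \<Longrightarrow> {0<..<(1/2::real)} - E \<in> sets lebesgue"
proof -
  assume "finite E"
  have "{0<..<(1/2::real)} \<in> sets lebesgue" by force
  then show ?thesis using fin_leb[OF \<open>finite E\<close>] by (rule sets.Diff)
qed

lemma cov:
  fixes f h :: "real \<Rightarrow> real" and c r a b :: real
  assumes r: "r > 0" and cr: "c + r = 1" "c - r = -a" and T: "finite T"
    and hc: "continuous_on {0..1/2} h"
    and eq: "\<And>x. x \<in> {0<..<1/2} \<Longrightarrow> c + r * cos (2*pi*x) \<notin> T \<Longrightarrow> 2 * pi * r * sin (2*pi*x) * f (c + r * cos (2*pi*x)) = h x"
    and hi: "(h has_integral b) {0..1/2}"
  shows "(f has_integral b) {-a..1}"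
proof -
  define g where "g x = c + r * cos (2*pi*x)" for x
  define g' where "g' x = - (2*pi*r * sin (2*pi*x))" for x
  define S0 where "S0 = {0<..<(1/2::real)}"
  have inj0: "inj_on g S0"
  proof (rule inj_onI)
    fix x y assume xy: "x \<in> S0" "y \<in> S0" "g x = g y"
    then have c: "cos (2*pi*x) = cos (2*pi*y)" unfolding g_def using r by simp
    show "x = y"
    proof (rule ccontr)
      assume "x \<noteq> y"
      then consider "x < y" | "y < x" by linarith
      then show False
      proof cases
        case 1
        then have "cos (2*pi*y) < cos (2*pi*x)" using xy unfolding S0_def
          by (intro cos_monotone_0_pi) auto
        then show False using c by simp
      next
        case 2
        then have "cos (2*pi*x) < cos (2*pi*y)" using xy unfolding S0_def
          by (intro cos_monotone_0_pi) auto
        then show False using c by simp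
      qed
    qed
  qed
  define E where "E = g -` T \<inter> S0"
  have E: "finite E" unfolding E_def by (rule finite_vimage_IntI[OF T inj0])
  define S where "S = S0 - E"
  have Sl: "S \<in> sets lebesgue" unfolding S_def S0_def by (rule S_leb[OF E])
  have der: "(g has_field_derivative g' x) (at x within S)" for x
    unfolding g_def g'_def by (auto intro!: derivative_eq_intros)
  have inj: "inj_on g S" using inj0 unfolding S_def by (rule inj_on_subset) auto
  have abs: "\<bar>g' x\<bar> * f (g x) = h x" if "x \<in> S" for x
  proof -
    have "0 < 2*pi*x" "2*pi*x < pi" using that unfolding S_def S0_def by auto
    then have "sin (2*pi*x) > 0" by (rule sin_gt_zero)
    then have "\<bar>g' x\<bar> = 2*pi*r* sin (2*pi*x)" unfolding g'_def using r by simp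
    then show ?thesis using eq[of x] that unfolding S_def S0_def E_def g_def by auto
  qed
  have hai: "h absolutely_integrable_on {0..1/2}" by (rule absolutely_integrable_continuous_real[OF hc])
  have haS: "h absolutely_integrable_on S"
    by (rule set_integrable_subset[OF hai Sl]) (auto simp: S_def S0_def)
  have neg1: "negligible ({0..1/2} - S)"
    by (rule negligible_subset[of "{0,1/2} \<union> E"]) (auto simp: S_def S0_def E)
  have hS: "(h has_integral b) S"
  proof (subst has_integral_spike_set_eq)
    show "negligible {x \<in> S - {0..1/2}. h x \<noteq> 0}" by (rule negligible_subset[of "{}"]) (auto simp: S_def S0_def)
    show "negligible {x \<in> {0..1/2} - S. h x \<noteq> 0}" by (rule negligible_subset[OF neg1]) auto
  qed (rule hi)
  have L: "(\<lambda>x. \<bar>g' x\<bar> * f (g x)) absolutely_integrable_on S \<and> integral S (\<lambda>x. \<bar>g' x\<bar> * f (g x)) = b"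
  proof
    show "(\<lambda>x. \<bar>g' x\<bar> * f (g x)) absolutely_integrable_on S"
    proof -
      have "(\<lambda>x. indicat_real S x *\<^sub>R (\<bar>g' x\<bar> * f (g x))) = (\<lambda>x. indicat_real S x *\<^sub>R h x)"
        by (rule ext) (simp add: indicator_def abs)
      then show ?thesis using haS unfolding set_integrable_def by simp
    qed
    show "integral S (\<lambda>x. \<bar>g' x\<bar> * f (g x)) = b"
    proof -
      have "integral S (\<lambda>x. \<bar>g' x\<bar> * f (g x)) = integral S h" by (rule integral_cong) (simp add: abs)
      then show ?thesis using integral_unique[OF hS] by simp
    qed
  qed
  have R: "f absolutely_integrable_on g ` S \<and> integral (g ` S) f = b"
    using has_absolute_integral_change_of_variables_1'[OF Sl der inj] L by blast
  then have fgS: "(f has_integral b) (g ` S)"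
    using set_lebesgue_integral_eq_integral(1) by (metis has_integral_integrable_integral)
  have sub: "g ` S \<subseteq> {-a..1}"
  proof
    fix t assume "t \<in> g ` S"
    then obtain x where tx: "t = g x" by auto
    have "r * cos (2*pi*x) \<le> r * 1" by (rule mult_left_mono) (use r in auto)
    moreover have "r * (-1) \<le> r * cos (2*pi*x)" by (rule mult_left_mono) (use r in auto)
    ultimately show "t \<in> {-a..1}" unfolding tx g_def using cr by auto
  qed
  have sur: "{-a<..<1} - T \<subseteq> g ` S"
  proof
    fix t assume t: "t \<in> {-a<..<1} - T"
    define y where "y = (t - c)/r"
    have y: "-1 < y" "y < 1" using t r cr unfolding y_def by (auto simp: field_simps)
    define x where "x = arccos y / (2*pi)"
    have "0 < arccos y" "arccos y < pi" using arccos_lt_bounded[OF y] by auto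
    then have x: "0 < x" "x < 1/2" unfolding x_def by (auto simp: field_simps)
    have gx: "g x = t" unfolding g_def x_def using y r by (simp add: y_def)
    have "x \<notin> E" using t gx unfolding E_def by auto
    then show "t \<in> g ` S" using x gx unfolding S_def S0_def by auto
  qed
  have "{-a..1} - g ` S \<subseteq> {-a, 1} \<union> T"
  proof
    fix x assume x: "x \<in> {-a..1} - g ` S"
    show "x \<in> {-a, 1} \<union> T"
    proof (rule ccontr)
      assume "x \<notin> {-a, 1} \<union> T"
      then have "x \<in> {-a<..<1} - T" using x by auto
      then show False using sur x by blast
    qed
  qed
  then have neg2: "negligible ({-a..1} - g ` S)"
    by (rule negligible_subset[rotated]) (auto simp: T)
  show ?thesis
  proof (subst has_integral_spike_set_eq)
    show "negligible {x \<in> {-a..1} - g ` S. f x \<noteq> 0}" by (rule negligible_subset[OF neg2]) auto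
    show "negligible {x \<in> g ` S - {-a..1}. f x \<noteq> 0}" by (rule negligible_subset[of "{}"]) (use sub in auto)
  qed (rule fgS)
qed

fun Dh :: "nat \<Rightarrow> 'a::comm_ring_1 \<Rightarrow> 'a \<Rightarrow> 'a" where
  "Dh 0 u v = 0"
| "Dh (Suc 0) u v = 2 * v"
| "Dh (Suc (Suc k)) u v = 2 * u * Dh (Suc k) u v - v^2 * Dh k u v + 2 * v^(k+2)"

lemma Dh_hom: "Dh k (x * v) v = v^k * Dh k x 1"
  by (induction k "x * v" v rule: Dh.induct) (auto simp: algebra_simps power2_eq_square)

lemma Dh_zero: "Dh k u 0 = 0"
  by (induction k u "0::'a" rule: Dh.induct) auto

lemma Ch_D: "Ch k x 1 = 1 + (x - 1) * Dh k x 1"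
proof (induction k x "1::'a" rule: Ch.induct)
  case (3 k u)
  have "Ch (Suc (Suc k)) u 1 = 2 * u * Ch (Suc k) u 1 - Ch k u 1" by simp
  also have "\<dots> = 2 * u * (1 + (u - 1) * Dh (Suc k) u 1) - (1 + (u - 1) * Dh k u 1)"
    using 3 by simp
  also have "\<dots> = 1 + (u - 1) * Dh (Suc (Suc k)) u 1" by (simp add: algebra_simps)
  finally show ?case .
qed (auto simp: algebra_simps)

lemma Dh_of_real: "of_real (Dh k x y) = Dh k (of_real x) (of_real y :: 'a::{real_algebra_1,comm_ring_1})"
  by (induction k x y rule: Dh.induct) auto

lemma Yc_of_real: "Yc k l a (of_real t) = of_real (Yr k l a t)"
  unfolding Yc_def Yr_def by (simp add: Sh_of_real)
lemma Xc_of_real: "Xc k l a (of_real t) = of_real (Xr k l a t)"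
  unfolding Xc_def Xr_def by (simp add: Ch_of_real)

lemma circ_t:
  assumes "norm w = 1"
  shows "tauf a w / w = of_real ((1-a)/2 + (1+a)/2 * Re w)"
    "of_real ((1+a)/2) * (1/w - w) / 2 = - \<i> * of_real ((1+a)/2 * Im w)"
proof -
  have w0: "w \<noteq> 0" using assms by auto
  have iw: "1/w = cnj w" using assms by (simp add: divide_conv_cnj)
  show "tauf a w / w = of_real ((1-a)/2 + (1+a)/2 * Re w)"
    unfolding tauf_div[OF w0] iw by (simp add: complex_eq_iff)
  show "of_real ((1+a)/2) * (1/w - w) / 2 = - \<i> * of_real ((1+a)/2 * Im w)"
    unfolding iw by (simp add: complex_eq_iff)
qed

lemma circ_Q:
  assumes "norm w = 1" "a \<noteq> 0"
  defines "tr \<equiv> (1-a)/2 + (1+a)/2 * Re w"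
  shows "Qf k l a w = w^(k+l+1) * (of_real (tr * Yr k l a tr) - \<i> * of_real ((1+a)/2 * Im w * Xr k l a tr))"
proof -
  have w0: "w \<noteq> 0" using assms by auto
  show ?thesis unfolding Qf_eq[OF w0 assms(2)] circ_t[OF assms(1)] tr_def[symmetric]
    by (simp add: Yc_of_real Xc_of_real)
qed

lemma Sh_holo: assumes "f holomorphic_on S" "g holomorphic_on S"
  shows "(\<lambda>w. Sh k (f w) (g w)) holomorphic_on S"
proof -
  have "(\<lambda>w. Sh k (f w) (g w)) holomorphic_on S \<and> (\<lambda>w. Sh (Suc k) (f w) (g w)) holomorphic_on S"
  proof (induction k)
    case 0 then show ?case using assms by (auto intro!: holomorphic_intros)
  next
    case (Suc k) then show ?case using assms by (auto intro!: holomorphic_intros)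
  qed
  then show ?thesis by blast
qed

lemma Ch_holo: assumes "f holomorphic_on S" "g holomorphic_on S"
  shows "(\<lambda>w. Ch k (f w) (g w)) holomorphic_on S"
proof -
  have "(\<lambda>w. Ch k (f w) (g w)) holomorphic_on S \<and> (\<lambda>w. Ch (Suc k) (f w) (g w)) holomorphic_on S"
  proof (induction k)
    case 0 then show ?case using assms by (auto intro!: holomorphic_intros)
  next
    case (Suc k) then show ?case using assms by (auto intro!: holomorphic_intros)
  qed
  then show ?thesis by blast
qed

lemma Dh_holo: assumes "f holomorphic_on S" "g holomorphic_on S"
  shows "(\<lambda>w. Dh k (f w) (g w)) holomorphic_on S"
proof -
  have "(\<lambda>w. Dh k (f w) (g w)) holomorphic_on S \<and> (\<lambda>w. Dh (Suc k) (f w) (g w)) holomorphic_on S"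
  proof (induction k)
    case 0 then show ?case using assms by (auto intro!: holomorphic_intros)
  next
    case (Suc k) then show ?case using assms by (auto intro!: holomorphic_intros)
  qed
  then show ?thesis by blast
qed

lemma tauf_holo: "tauf a holomorphic_on S"
  unfolding tauf_def by (auto intro!: holomorphic_intros)

lemma Qf_holo: assumes "a \<noteq> 0" shows "Qf k l a holomorphic_on S"
proof -
  have "(\<lambda>w. Qf k l a w) holomorphic_on S" unfolding Qf_def
    by (intro holomorphic_intros Sh_holo Ch_holo tauf_holo) (use assms in auto)
  then show ?thesis by simp
qed

definition PhiS :: "nat \<Rightarrow> nat \<Rightarrow> real \<Rightarrow> nat \<Rightarrow> complex \<Rightarrow> complex" where
  "PhiS k l a j w = tauf a w ^ j * w ^ (k+l+1-j) / Qf k l a w"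
definition PhiC :: "nat \<Rightarrow> nat \<Rightarrow> real \<Rightarrow> nat \<Rightarrow> complex \<Rightarrow> complex" where
  "PhiC k l a j w = of_real ((1+a)/2) / 2 * (1 - w^2) * tauf a w ^ j * w ^ (k+l-j) / Qf k l a w"
definition NM :: "nat \<Rightarrow> nat \<Rightarrow> real \<Rightarrow> complex \<Rightarrow> complex" where
  "NM k l a w = 2 * of_real a * w^(l+1) * Dh k (w - 2 * tauf a w) w
     - 2 * w^(k+1) * Dh l (w + 2 * tauf a w / of_real a) w
     + 4 * tauf a w * Dh k (w - 2 * tauf a w) w * Dh l (w + 2 * tauf a w / of_real a) w
     + of_real ((1+a)/2) / 2 * (1 - w^2) * Sh k (w - 2 * tauf a w) w * Sh l (w + 2 * tauf a w / of_real a) w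
     + (tauf a w - 2 * of_real ((1-a)/2) * w) * Ch k (w - 2 * tauf a w) w * Ch l (w + 2 * tauf a w / of_real a) w"
definition PhiM :: "nat \<Rightarrow> nat \<Rightarrow> real \<Rightarrow> complex \<Rightarrow> complex" where
  "PhiM k l a w = NM k l a w / (of_real a * Qf k l a w)"

lemma PhiS_holo: assumes "a \<noteq> 0" shows "PhiS k l a j holomorphic_on {w. Qf k l a w \<noteq> 0}"
proof -
  have "(\<lambda>w. PhiS k l a j w) holomorphic_on {w. Qf k l a w \<noteq> 0}" unfolding PhiS_def
    by (intro holomorphic_intros tauf_holo Qf_holo assms) auto
  then show ?thesis by simp
qed

lemma PhiC_holo: assumes "a \<noteq> 0" shows "PhiC k l a j holomorphic_on {w. Qf k l a w \<noteq> 0}"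
proof -
  have "(\<lambda>w. PhiC k l a j w) holomorphic_on {w. Qf k l a w \<noteq> 0}" unfolding PhiC_def
    by (intro holomorphic_intros tauf_holo Qf_holo assms) auto
  then show ?thesis by simp
qed

lemma PhiM_holo: assumes "a \<noteq> 0" shows "PhiM k l a holomorphic_on {w. Qf k l a w \<noteq> 0}"
proof -
  have "(\<lambda>w. PhiM k l a w) holomorphic_on {w. Qf k l a w \<noteq> 0}" unfolding PhiM_def NM_def
    by (intro holomorphic_intros tauf_holo Qf_holo Sh_holo Ch_holo Dh_holo assms) (use assms in auto)
  then show ?thesis by simp
qed

lemma open_Qne: assumes "a \<noteq> 0" shows "open {w. Qf k l a w \<noteq> 0}"
proof -
  have "continuous_on UNIV (Qf k l a)" by (rule holomorphic_on_imp_continuous_on[OF Qf_holo[OF assms]])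
  moreover have "{w. Qf k l a w \<noteq> 0} = Qf k l a -` (- {0})" by auto
  ultimately show ?thesis by (metis open_vimage open_Compl closed_singleton)
qed

lemma re_div: "Re ((of_real p - \<i> * of_real q) / (of_real A - \<i> * of_real B)) = (p*A + q*B) / (A^2 + B^2)"
  by (simp add: Re_divide power2_eq_square)

context
  fixes k l :: nat and a :: real
  assumes a: "a > 0"
begin

lemma rho_poly: assumes "-a \<le> t" "t \<le> 1"
  shows "rho (2*k+1) (2*l+1) a t = 2 * ((1-t)*(1+t/a) * (Xr k l a t)^2 + t^2 * (Yr k l a t)^2 / a)"
proof -
  have "1 + t/a \<ge> 0" using assms a by (simp add: field_simps)
  then have "(1-t)*(1+t/a) \<ge> 0" using assms by (intro mult_nonneg_nonneg) auto
  then have "(CC (2*k+1) (2*l+1) a t)^2 = (1-t)*(1+t/a) * (Xr k l a t)^2"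
    unfolding CC_eq[OF a assms] by (simp add: power_mult_distrib)
  moreover have "(SS (2*k+1) (2*l+1) a t)^2 = t^2 * (Yr k l a t)^2 / a"
    unfolding SS_eq[OF a assms] using a by (simp add: power_mult_distrib power_divide)
  ultimately show ?thesis unfolding rho_eq[OF a assms] by simp
qed

lemma circ_tr: assumes "norm w = 1"
  shows "-a \<le> (1-a)/2 + (1+a)/2 * Re w" "(1-a)/2 + (1+a)/2 * Re w \<le> 1"
    "(1 - ((1-a)/2 + (1+a)/2 * Re w)) * (1 + ((1-a)/2 + (1+a)/2 * Re w)/a) = ((1+a)/2 * Im w)^2 / a"
proof -
  have n: "(Re w)^2 + (Im w)^2 = 1" using assms by (metis cmod_power2 power_one)
  have "\<bar>Re w\<bar> \<le> 1" using abs_Re_le_cmod[of w] assms by simp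
  then have r: "-1 \<le> Re w" "Re w \<le> 1" by auto
  have "(1+a)/2 * Re w \<ge> (1+a)/2 * (-1)" by (rule mult_left_mono) (use r a in auto)
  then show "-a \<le> (1-a)/2 + (1+a)/2 * Re w" by (simp add: field_simps)
  have "(1+a)/2 * Re w \<le> (1+a)/2 * 1" by (rule mult_left_mono) (use r a in auto)
  then show "(1-a)/2 + (1+a)/2 * Re w \<le> 1" by (simp add: field_simps)
  have e1: "1 - ((1-a)/2 + (1+a)/2 * Re w) = (1+a)/2 * (1 - Re w)" by (simp add: field_simps)
  have e2: "1 + ((1-a)/2 + (1+a)/2 * Re w)/a = (1+a)/2 * (1 + Re w) / a" using a by (simp add: field_simps)
  have im2: "(Im w)^2 = 1 - (Re w)^2" using n by simp
  have e3: "((1+a)/2 * Im w)^2 = ((1+a)/2)^2 * (1 - (Re w)^2)" unfolding power_mult_distrib im2 ..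
  show "(1 - ((1-a)/2 + (1+a)/2 * Re w)) * (1 + ((1-a)/2 + (1+a)/2 * Re w)/a) = ((1+a)/2 * Im w)^2 / a"
    unfolding e1 e2 e3 using a by (simp add: field_simps power2_eq_square)
qed

lemma circ_pos: assumes "norm w = 1"
  defines "tr \<equiv> (1-a)/2 + (1+a)/2 * Re w"
  shows "(tr * Yr k l a tr)^2 + ((1+a)/2 * Im w * Xr k l a tr)^2 > 0"
proof -
  note c = circ_tr[OF assms(1), folded tr_def]
  define p where "p = (1+a)/2 * Im w"
  have "rho (2*k+1) (2*l+1) a tr > 0" by (rule rho_pos[OF a c(1,2)]) auto
  also have "rho (2*k+1) (2*l+1) a tr = 2 * (p^2 / a * (Xr k l a tr)^2 + tr^2 * (Yr k l a tr)^2 / a)"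
    unfolding rho_poly[OF c(1,2)] c(3) p_def ..
  also have "\<dots> = (2/a) * ((tr * Yr k l a tr)^2 + (p * Xr k l a tr)^2)"
    using a by (simp add: field_simps power_mult_distrib)
  finally have pos: "0 < (2/a) * ((tr * Yr k l a tr)^2 + (p * Xr k l a tr)^2)" .
  have "0 < 2/a" using a by simp
  from zero_less_mult_pos[OF pos this] show ?thesis unfolding p_def .
qed

lemma Qf_circle_ne: assumes "norm w = 1" shows "Qf k l a w \<noteq> 0"
proof -
  define tr where "tr = (1-a)/2 + (1+a)/2 * Re w"
  have "(tr * Yr k l a tr)^2 + ((1+a)/2 * Im w * Xr k l a tr)^2 > 0"
    unfolding tr_def by (rule circ_pos[OF assms])
  then have "of_real (tr * Yr k l a tr) - \<i> * of_real ((1+a)/2 * Im w * Xr k l a tr) \<noteq> 0"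
    by (auto simp: complex_eq_iff)
  moreover have "w \<noteq> 0" using assms by auto
  ultimately show ?thesis unfolding circ_Q[OF assms order.strict_implies_not_eq[OF a, symmetric]] tr_def[symmetric] by simp
qed

lemma Qf_cball_ne: assumes "norm w \<le> 1" shows "Qf k l a w \<noteq> 0"
  using Qf_circle_ne stab_open[OF a] assms by (cases "norm w = 1") auto

lemma NM_eq:
  assumes "w \<noteq> 0"
  defines "t \<equiv> tauf a w / w"
  shows "NM k l a w = w^(k+l+1) * (2 * of_real a * Dh k (1 - 2*t) 1 - 2 * Dh l (1 + 2*t/of_real a) 1
      + 4 * t * Dh k (1 - 2*t) 1 * Dh l (1 + 2*t/of_real a) 1
      + (of_real ((1+a)/2) * (1/w - w) / 2) * Yc k l a t + (t - 2 * of_real ((1-a)/2)) * Xc k l a t)"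
proof -
  define \<sigma> where "\<sigma> = of_real ((1+a)/2) * (1/w - w) / 2"
  have tw: "tauf a w = t * w" using assms unfolding t_def by simp
  have e1: "w - 2 * tauf a w = (1 - 2*t) * w" unfolding tw by (simp add: algebra_simps)
  have e2: "w + 2 * tauf a w / of_real a = (1 + 2*t/of_real a) * w" unfolding tw
    by (simp add: algebra_simps)
  have e3: "of_real ((1+a)/2) / 2 * (1 - w^2) = \<sigma> * w"
    using assms unfolding \<sigma>_def by (simp add: field_simps power2_eq_square)
  have e4: "tauf a w - 2 * of_real ((1-a)/2) * w = (t - 2 * of_real ((1-a)/2)) * w"
    unfolding tw by (simp add: algebra_simps)
  have "NM k l a w = 2 * of_real a * w^(l+1) * (w^k * Dh k (1 - 2*t) 1) - 2 * w^(k+1) * (w^l * Dh l (1 + 2*t/of_real a) 1)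
     + 4 * (t * w) * (w^k * Dh k (1 - 2*t) 1) * (w^l * Dh l (1 + 2*t/of_real a) 1)
     + (\<sigma> * w) * (w^k * Sh k (1 - 2*t) 1) * (w^l * Sh l (1 + 2*t/of_real a) 1)
     + ((t - 2 * of_real ((1-a)/2)) * w) * (w^k * Ch k (1 - 2*t) 1) * (w^l * Ch l (1 + 2*t/of_real a) 1)"
    unfolding NM_def e1 e2 e3 e4 Sh_hom Ch_hom Dh_hom unfolding tw ..
  also have "\<dots> = w^(k+l+1) * (2 * of_real a * Dh k (1 - 2*t) 1 - 2 * Dh l (1 + 2*t/of_real a) 1
      + 4 * t * Dh k (1 - 2*t) 1 * Dh l (1 + 2*t/of_real a) 1
      + \<sigma> * Yc k l a t + (t - 2 * of_real ((1-a)/2)) * Xc k l a t)"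
    unfolding Yc_def Xc_def by (simp add: algebra_simps power_add)
  finally show ?thesis unfolding \<sigma>_def .
qed

lemma circ_facts: assumes "norm w = 1"
  shows "w \<noteq> 0" "tauf a w = of_real ((1-a)/2 + (1+a)/2 * Re w) * w"
proof -
  show w0: "w \<noteq> 0" using assms by auto
  show "tauf a w = of_real ((1-a)/2 + (1+a)/2 * Re w) * w"
    using circ_t(1)[OF assms, of a] w0 by (simp add: divide_eq_eq)
qed

lemma ReS: assumes w: "norm w = 1" and j: "j \<le> k+l+1"
  defines "tr \<equiv> (1-a)/2 + (1+a)/2 * Re w"
  shows "Re (PhiS k l a j w) = tr^j * (tr * Yr k l a tr) / ((tr * Yr k l a tr)^2 + ((1+a)/2 * Im w * Xr k l a tr)^2)"
proof -
  note cf = circ_facts[OF w]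
  define V where "V = of_real (tr * Yr k l a tr) - \<i> * of_real ((1+a)/2 * Im w * Xr k l a tr)"
  have Q: "Qf k l a w = w^(k+l+1) * V"
    unfolding V_def tr_def by (rule circ_Q[OF w]) (use a in simp)
  have "PhiS k l a j w = (of_real tr * w)^j * w^(k+l+1-j) / (w^(k+l+1) * V)"
    unfolding PhiS_def Q cf(2) tr_def ..
  also have "\<dots> = of_real (tr^j) * (w^j * w^(k+l+1-j)) / (w^(k+l+1) * V)"
    by (simp add: power_mult_distrib)
  also have "w^j * w^(k+l+1-j) = w^(k+l+1)" using j by (simp add: power_add[symmetric])
  also have "of_real (tr^j) * w^(k+l+1) / (w^(k+l+1) * V) = (of_real (tr^j) - \<i> * of_real 0) / V"
    using cf(1) by simp
  finally have e: "PhiS k l a j w = (of_real (tr^j) - \<i> * of_real 0) / V" .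
  show ?thesis unfolding e V_def re_div by simp
qed

lemma ReC: assumes w: "norm w = 1" and j: "j \<le> k+l"
  defines "tr \<equiv> (1-a)/2 + (1+a)/2 * Re w"
  shows "Re (PhiC k l a j w) = tr^j * ((1+a)/2 * Im w) * ((1+a)/2 * Im w * Xr k l a tr)
     / ((tr * Yr k l a tr)^2 + ((1+a)/2 * Im w * Xr k l a tr)^2)"
proof -
  note cf = circ_facts[OF w]
  define V where "V = of_real (tr * Yr k l a tr) - \<i> * of_real ((1+a)/2 * Im w * Xr k l a tr)"
  have Q: "Qf k l a w = w^(k+l+1) * V"
    unfolding V_def tr_def by (rule circ_Q[OF w]) (use a in simp)
  have e3: "of_real ((1+a)/2) / 2 * (1 - w^2) = (- \<i> * of_real ((1+a)/2 * Im w)) * w"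
    using circ_t(2)[OF w, of a, symmetric] cf(1) by (simp add: field_simps power2_eq_square)
  have "PhiC k l a j w = (- \<i> * of_real ((1+a)/2 * Im w)) * w * (of_real tr * w)^j * w^(k+l-j) / (w^(k+l+1) * V)"
    unfolding PhiC_def Q cf(2) tr_def e3 ..
  also have "\<dots> = (- \<i> * of_real ((1+a)/2 * Im w * tr^j)) * (w * w^j * w^(k+l-j)) / (w^(k+l+1) * V)"
    by (simp add: power_mult_distrib)
  also have "w * w^j * w^(k+l-j) = w^(k+l+1)" using j by (simp add: power_add[symmetric])
  also have "(- \<i> * of_real ((1+a)/2 * Im w * tr^j)) * w^(k+l+1) / (w^(k+l+1) * V)
     = (of_real 0 - \<i> * of_real ((1+a)/2 * Im w * tr^j)) / V"
    using cf(1) by simp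
  finally have e: "PhiC k l a j w = (of_real 0 - \<i> * of_real ((1+a)/2 * Im w * tr^j)) / V" .
  show ?thesis unfolding e V_def re_div by (simp add: algebra_simps)
qed

lemma ReM: assumes w: "norm w = 1"
  defines "tr \<equiv> (1-a)/2 + (1+a)/2 * Re w"
  shows "Re (PhiM k l a w) = Yr k l a tr / ((tr * Yr k l a tr)^2 + ((1+a)/2 * Im w * Xr k l a tr)^2)"
proof -
  note cf = circ_facts[OF w]
  define V where "V = of_real (tr * Yr k l a tr) - \<i> * of_real ((1+a)/2 * Im w * Xr k l a tr)"
  have Q: "Qf k l a w = w^(k+l+1) * V"
    unfolding V_def tr_def by (rule circ_Q[OF w]) (use a in simp)
  define D1 where "D1 = Dh k (1 - 2*tr) 1"
  define D2 where "D2 = Dh l (1 + 2*tr/a) 1"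
  define X where "X = Xr k l a tr"
  define Y where "Y = Yr k l a tr"
  define R0 where "R0 = 2 * a * D1 - 2 * D2 + 4 * tr * D1 * D2 + (tr - 2 * ((1-a)/2)) * X"
  define q where "q = (1+a)/2 * Im w * Y"
  have t: "tauf a w / w = of_real tr" unfolding tr_def by (rule circ_t(1)[OF w])
  have d1: "Dh k (1 - 2 * complex_of_real tr) 1 = of_real D1" unfolding D1_def by (simp add: Dh_of_real)
  have d2: "Dh l (1 + 2 * complex_of_real tr / of_real a) 1 = of_real D2" unfolding D2_def by (simp add: Dh_of_real)
  have NMe: "NM k l a w = w^(k+l+1) * (of_real R0 - \<i> * of_real q)"
    unfolding NM_eq[OF cf(1)] t circ_t(2)[OF w] d1 d2 Yc_of_real Xc_of_real R0_def q_def X_def Y_def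
    by (simp add: algebra_simps) (simp add: add_divide_distrib[symmetric])
  have "PhiM k l a w = (w^(k+l+1) * (of_real R0 - \<i> * of_real q)) / (of_real a * (w^(k+l+1) * V))"
    unfolding PhiM_def Q NMe ..
  also have "\<dots> = (of_real R0 - \<i> * of_real q) / (of_real a * V)"
    using cf(1) by (simp add: mult.left_commute[of "of_real a"])
  also have "\<dots> = ((of_real R0 - \<i> * of_real q) / of_real a) / V"
    by (simp add: divide_divide_eq_left mult.commute)
  also have "(of_real R0 - \<i> * of_real q) / of_real a = of_real (R0/a) - \<i> * of_real (q/a)"
    by (simp add: diff_divide_distrib)
  finally have e0: "PhiM k l a w = (of_real (R0/a) - \<i> * of_real (q/a)) / V" .
  have e: "Re (PhiM k l a w) = (R0/a * (tr * Y) + q/a * ((1+a)/2 * Im w * X)) / ((tr * Y)^2 + ((1+a)/2 * Im w * X)^2)"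
    unfolding e0 V_def re_div X_def Y_def ..
  have Xeq: "X = (1 - 2*tr*D1) * (1 + 2*tr/a*D2)"
    unfolding X_def Xr_def D1_def D2_def by (simp add: Ch_D[of k] Ch_D[of l] algebra_simps)
  define P where "P = ((1+a)/2 * Im w)^2"
  have c3: "(1 - tr) * (1 + tr/a) = P / a" unfolding P_def tr_def by (rule circ_tr(3)[OF w])
  have h: "a + tr = P + (a*tr + tr*tr)" using c3 a by (simp add: field_simps)
  have "P = a + tr - (a*tr + tr*tr)" using h by linarith
  also have "\<dots> = (1 - tr) * (a + tr)" by (simp add: algebra_simps)
  finally have "P = (1 - tr) * (a + tr)" .
  then have s2: "((1+a)/2 * Im w)^2 = (1 - tr) * (a + tr)" unfolding P_def .
  have key: "R0 * tr + ((1+a)/2 * Im w)^2 * X = a"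
    unfolding s2 R0_def Xeq using a by (simp add: field_simps)
  have "R0/a * (tr * Y) + q/a * ((1+a)/2 * Im w * X) = Y/a * (R0 * tr + ((1+a)/2 * Im w)^2 * X)"
    unfolding q_def using a by (simp add: field_simps power2_eq_square)
  also have "\<dots> = Y" unfolding key using a by simp
  finally have "R0/a * (tr * Y) + q/a * ((1+a)/2 * Im w * X) = Y" .
  then show ?thesis unfolding e X_def Y_def by simp
qed

end

lemma e_facts: "Re (exp (2 * of_real pi * \<i> * of_real x)) = cos (2*pi*x)"
  "Im (exp (2 * of_real pi * \<i> * of_real x)) = sin (2*pi*x)"
  "norm (exp (2 * of_real pi * \<i> * of_real x)) = 1"
proof -
  have e: "2 * of_real pi * \<i> * of_real x = \<i> * of_real (2*pi*x)" by simp
  show "Re (exp (2 * of_real pi * \<i> * of_real x)) = cos (2*pi*x)" unfolding e by (simp add: Re_exp)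
  show "Im (exp (2 * of_real pi * \<i> * of_real x)) = sin (2*pi*x)" unfolding e by (simp add: Im_exp)
  show "norm (exp (2 * of_real pi * \<i> * of_real x)) = 1" unfolding e by simp
qed

lemma pipeline:
  fixes \<Phi> :: "complex \<Rightarrow> complex" and F :: "real \<Rightarrow> real \<Rightarrow> real"
  assumes a: "a > 0" and hol: "\<Phi> holomorphic_on {w. Qf k l a w \<noteq> 0}"
    and circ: "\<And>w. norm w = 1 \<Longrightarrow> Re (\<Phi> w) = F (Re w) (Im w)"
    and sym: "\<And>c s. F c (-s) = F c s"
  shows "((\<lambda>x. F (cos (2*pi*x)) (sin (2*pi*x))) has_integral (Re (\<Phi> 0) / 2)) {0..1/2}"
    "continuous_on {0..1/2} (\<lambda>x. F (cos (2*pi*x)) (sin (2*pi*x)))"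
proof -
  define e where "e x = exp (2 * of_real pi * \<i> * of_real x)" for x :: real
  have U: "open {w. Qf k l a w \<noteq> 0}" by (rule open_Qne) (use a in simp)
  have C: "cball 0 1 \<subseteq> {w. Qf k l a w \<noteq> 0}" using Qf_cball_ne[OF a] by auto
  have "((\<lambda>x. \<Phi> (e x)) has_integral \<Phi> 0) {0..1}" unfolding e_def by (rule mean_value_circle[OF hol U C])
  then have I: "((\<lambda>x. Re (\<Phi> (e x))) has_integral Re (\<Phi> 0)) {0..1}" by (rule has_integral_Re)
  have eqF: "Re (\<Phi> (e x)) = F (cos (2*pi*x)) (sin (2*pi*x))" for x
    using circ[of "e x"] unfolding e_def e_facts by simp
  have cont1: "continuous_on {0..1} (\<lambda>x. Re (\<Phi> (e x)))"
  proof -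
    have "continuous_on UNIV e" unfolding e_def by (intro continuous_intros)
    moreover have "continuous_on (e ` UNIV) \<Phi>"
      by (rule holomorphic_on_imp_continuous_on, rule holomorphic_on_subset[OF hol])
         (use Qf_circle_ne[OF a] e_facts(3) in \<open>auto simp: e_def\<close>)
    ultimately have "continuous_on UNIV (\<lambda>x. \<Phi> (e x))" by (rule continuous_on_compose[unfolded o_def])
    then show ?thesis by (intro continuous_intros) (auto intro: continuous_on_subset)
  qed
  have cont: "continuous_on {0..1} (\<lambda>x. F (cos (2*pi*x)) (sin (2*pi*x)))"
    using cont1 unfolding eqF .
  have I2: "((\<lambda>x. F (cos (2*pi*x)) (sin (2*pi*x))) has_integral Re (\<Phi> 0)) {0..1}"
    using I unfolding eqF .
  show "((\<lambda>x. F (cos (2*pi*x)) (sin (2*pi*x))) has_integral (Re (\<Phi> 0) / 2)) {0..1/2}"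
  proof (rule halving[OF cont _ I2])
    fix x :: real
    have "cos (2*pi*(1-x)) = cos (2*pi*x)" "sin (2*pi*(1-x)) = - sin (2*pi*x)"
      by (simp_all add: right_diff_distrib cos_diff sin_diff)
    then show "F (cos (2*pi*(1-x))) (sin (2*pi*(1-x))) = F (cos (2*pi*x)) (sin (2*pi*x))"
      using sym by simp
  qed
  show "continuous_on {0..1/2} (\<lambda>x. F (cos (2*pi*x)) (sin (2*pi*x)))"
    by (rule continuous_on_subset[OF cont]) auto
qed

context
  fixes k l :: nat and a :: real
  assumes a: "a > 0"
begin

lemma Phi0: "j \<le> k+l \<Longrightarrow> PhiS k l a j 0 = 0" "j < k+l \<Longrightarrow> PhiC k l a j 0 = 0"
  "PhiM k l a 0 = 1 / of_real a"
proof -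
  show "j \<le> k+l \<Longrightarrow> PhiS k l a j 0 = 0" unfolding PhiS_def by simp
  show "j < k+l \<Longrightarrow> PhiC k l a j 0 = 0" unfolding PhiC_def by simp
  have t0: "tauf a 0 = of_real ((1+a)/2) / 2" by (simp add: tauf_def)
  have "NM k l a 0 = Qf k l a 0"
    unfolding NM_def Qf_def by (simp add: Dh_zero Sh_zero Ch_zero t0)
  then show "PhiM k l a 0 = 1 / of_real a"
    unfolding PhiM_def using Qf_0[OF a] a by simp
qed

lemma xfacts: assumes x: "x \<in> {0<..<1/2}"
  defines "tr \<equiv> (1-a)/2 + (1+a)/2 * cos (2*pi*x)"
  shows "-a \<le> tr" "tr \<le> 1" "sin (2*pi*x) > 0"
    "sqrt ((1-tr)*(1+tr/a)) = (1+a)/2 * sin (2*pi*x) / sqrt a"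
    "rho (2*k+1) (2*l+1) a tr = (2/a) * ((tr * Yr k l a tr)^2 + ((1+a)/2 * sin (2*pi*x) * Xr k l a tr)^2)"
    "(tr * Yr k l a tr)^2 + ((1+a)/2 * sin (2*pi*x) * Xr k l a tr)^2 > 0"
proof -
  define w where "w = exp (2 * of_real pi * \<i> * of_real x)"
  have w: "norm w = 1" "Re w = cos (2*pi*x)" "Im w = sin (2*pi*x)" unfolding w_def e_facts by simp_all
  note c = circ_tr[OF a w(1), unfolded w(2,3), folded tr_def]
  show "-a \<le> tr" "tr \<le> 1" using c by auto
  have "0 < 2*pi*x" "2*pi*x < pi" using x by auto
  then show s: "sin (2*pi*x) > 0" by (rule sin_gt_zero)
  have "sqrt ((1-tr)*(1+tr/a)) = sqrt (((1+a)/2 * sin (2*pi*x))^2) / sqrt a"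
    unfolding c(3) by (simp add: real_sqrt_divide)
  also have "\<dots> = (1+a)/2 * sin (2*pi*x) / sqrt a" using s a by simp
  finally show "sqrt ((1-tr)*(1+tr/a)) = (1+a)/2 * sin (2*pi*x) / sqrt a" .
  define p where "p = (1+a)/2 * sin (2*pi*x)"
  have "rho (2*k+1) (2*l+1) a tr = 2 * (p^2 / a * (Xr k l a tr)^2 + tr^2 * (Yr k l a tr)^2 / a)"
    unfolding rho_poly[OF a c(1,2)] c(3) p_def ..
  also have "\<dots> = (2/a) * ((tr * Yr k l a tr)^2 + (p * Xr k l a tr)^2)"
    using a by (simp add: field_simps power_mult_distrib)
  finally show "rho (2*k+1) (2*l+1) a tr = (2/a) * ((tr * Yr k l a tr)^2 + ((1+a)/2 * sin (2*pi*x) * Xr k l a tr)^2)"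
    unfolding p_def .
  show "(tr * Yr k l a tr)^2 + ((1+a)/2 * sin (2*pi*x) * Xr k l a tr)^2 > 0"
    using circ_pos[OF a w(1)] unfolding w(2,3) tr_def .
qed

lemma intS: assumes j: "j \<le> k+l"
  shows "((\<lambda>t. SS (2*k+1) (2*l+1) a t / rho (2*k+1) (2*l+1) a t * t ^ j / sqrt ((1 - t) * (1 + t / a)))
            has_integral 0) {-a..1}"
proof -
  define F where "F c s = (let tr = (1-a)/2 + (1+a)/2 * c in
     tr^j * (tr * Yr k l a tr) / ((tr * Yr k l a tr)^2 + ((1+a)/2 * s * Xr k l a tr)^2))" for c s
  have j1: "j \<le> k+l+1" using j by simp
  have circ: "Re (PhiS k l a j w) = F (Re w) (Im w)" if "norm w = 1" for w
    unfolding F_def Let_def by (rule ReS[OF a that j1])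
  have sym: "F c (-s) = F c s" for c s unfolding F_def Let_def by simp
  have ha: "a \<noteq> 0" using a by simp
  note P = pipeline[OF a PhiS_holo[OF ha] circ sym]
  have P1: "((\<lambda>x. pi * a * F (cos (2*pi*x)) (sin (2*pi*x))) has_integral 0) {0..1/2}"
    using has_integral_mult_right[OF P(1), of "pi * a"] Phi0(1)[OF j] by simp
  show ?thesis
  proof (rule cov[where r = "(1+a)/2" and c = "(1-a)/2" and T = "{}", OF _ _ _ _ _ _ P1])
    show "continuous_on {0..1/2} (\<lambda>x. pi * a * F (cos (2*pi*x)) (sin (2*pi*x)))"
      by (intro continuous_intros P(2))
    fix x :: real assume x: "x \<in> {0<..<1/2}"
    note xf = xfacts[OF x]
    define tr where "tr = (1-a)/2 + (1+a)/2 * cos (2*pi*x)"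
    define s where "s = sin (2*pi*x)"
    define Den where "Den = (tr * Yr k l a tr)^2 + ((1+a)/2 * s * Xr k l a tr)^2"
    have D: "Den > 0" using xf(6) unfolding Den_def tr_def s_def .
    have sa: "sqrt a > 0" using a by simp
    have s0: "s > 0" using xf(3) unfolding s_def .
    have SS: "SS (2*k+1) (2*l+1) a tr = tr / sqrt a * Yr k l a tr"
      by (rule SS_eq[OF a]) (use xf(1,2) in \<open>simp_all add: tr_def\<close>)
    have "2 * pi * ((1+a)/2) * s * (SS (2*k+1) (2*l+1) a tr / rho (2*k+1) (2*l+1) a tr * tr ^ j / sqrt ((1 - tr) * (1 + tr / a)))
      = 2 * pi * ((1+a)/2) * s * ((tr / sqrt a * Yr k l a tr) / ((2/a) * Den) * tr ^ j / ((1+a)/2 * s / sqrt a))"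
      unfolding SS xf(4,5)[folded tr_def s_def] Den_def ..
    also have "\<dots> = pi * a * (tr^j * (tr * Yr k l a tr) / Den)"
    proof -
      define r2 where "r2 = (1+a)/2"
      have r2: "r2 > 0" unfolding r2_def using a by simp
      show ?thesis unfolding r2_def[symmetric] using D sa s0 a r2 by (simp add: field_simps)
    qed
    finally show "2 * pi * ((1+a)/2) * sin (2*pi*x) * (SS (2*k+1) (2*l+1) a ((1-a)/2 + (1+a)/2 * cos (2*pi*x))
        / rho (2*k+1) (2*l+1) a ((1-a)/2 + (1+a)/2 * cos (2*pi*x)) * ((1-a)/2 + (1+a)/2 * cos (2*pi*x)) ^ j
        / sqrt ((1 - ((1-a)/2 + (1+a)/2 * cos (2*pi*x))) * (1 + ((1-a)/2 + (1+a)/2 * cos (2*pi*x)) / a)))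
      = pi * a * F (cos (2*pi*x)) (sin (2*pi*x))"
      unfolding F_def Let_def tr_def[symmetric] s_def[symmetric] Den_def[symmetric] .
  qed (use a in \<open>auto simp: field_simps\<close>)
qed

lemma intC: assumes j: "j < k+l"
  shows "((\<lambda>t. CC (2*k+1) (2*l+1) a t / rho (2*k+1) (2*l+1) a t * t ^ j) has_integral 0) {-a..1}"
proof -
  define F where "F c s = (let tr = (1-a)/2 + (1+a)/2 * c in
     tr^j * ((1+a)/2 * s) * ((1+a)/2 * s * Xr k l a tr) / ((tr * Yr k l a tr)^2 + ((1+a)/2 * s * Xr k l a tr)^2))" for c s
  have j1: "j \<le> k+l" using j by simp
  have circ: "Re (PhiC k l a j w) = F (Re w) (Im w)" if "norm w = 1" for w
    unfolding F_def Let_def by (rule ReC[OF a that j1])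
  have sym: "F c (-s) = F c s" for c s unfolding F_def Let_def by simp
  have ha: "a \<noteq> 0" using a by simp
  note P = pipeline[OF a PhiC_holo[OF ha] circ sym]
  have P1: "((\<lambda>x. pi * sqrt a * F (cos (2*pi*x)) (sin (2*pi*x))) has_integral 0) {0..1/2}"
    using has_integral_mult_right[OF P(1), of "pi * sqrt a"] Phi0(2)[OF j] by simp
  show ?thesis
  proof (rule cov[where r = "(1+a)/2" and c = "(1-a)/2" and T = "{}", OF _ _ _ _ _ _ P1])
    show "continuous_on {0..1/2} (\<lambda>x. pi * sqrt a * F (cos (2*pi*x)) (sin (2*pi*x)))"
      by (intro continuous_intros P(2))
    fix x :: real assume x: "x \<in> {0<..<1/2}"
    note xf = xfacts[OF x]
    define tr where "tr = (1-a)/2 + (1+a)/2 * cos (2*pi*x)"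
    define s where "s = sin (2*pi*x)"
    define Den where "Den = (tr * Yr k l a tr)^2 + ((1+a)/2 * s * Xr k l a tr)^2"
    have D: "Den > 0" using xf(6) unfolding Den_def tr_def s_def .
    have sa: "sqrt a > 0" using a by simp
    have sa2: "sqrt a * sqrt a = a" using a by simp
    have s0: "s > 0" using xf(3) unfolding s_def .
    have CC: "CC (2*k+1) (2*l+1) a tr = sqrt ((1-tr)*(1+tr/a)) * Xr k l a tr"
      by (rule CC_eq[OF a]) (use xf(1,2) in \<open>simp_all add: tr_def\<close>)
    have "2 * pi * ((1+a)/2) * s * (CC (2*k+1) (2*l+1) a tr / rho (2*k+1) (2*l+1) a tr * tr ^ j)
      = 2 * pi * ((1+a)/2) * s * (((1+a)/2 * s / sqrt a * Xr k l a tr) / ((2/a) * Den) * tr ^ j)"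
      unfolding CC xf(4,5)[folded tr_def s_def] Den_def ..
    also have "\<dots> = pi * sqrt a * (tr^j * ((1+a)/2 * s) * ((1+a)/2 * s * Xr k l a tr) / Den)"
    proof -
      define r2 where "r2 = (1+a)/2"
      have r2: "r2 > 0" unfolding r2_def using a by simp
      define Z where "Z = tr^j * (r2 * s) * (r2 * s * Xr k l a tr)"
      have "2 * pi * r2 * s * ((r2 * s / sqrt a * Xr k l a tr) / ((2/a) * Den) * tr ^ j)
          = (a / sqrt a) * (pi * Z / Den)"
        unfolding Z_def using D sa s0 a r2 by (simp add: field_simps)
      also have "a / sqrt a = sqrt a" using a by (simp add: real_div_sqrt)
      also have "sqrt a * (pi * Z / Den) = pi * sqrt a * (tr^j * (r2 * s) * (r2 * s * Xr k l a tr) / Den)"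
        unfolding Z_def by simp
      finally show ?thesis unfolding r2_def .
    qed
    finally show "2 * pi * ((1+a)/2) * sin (2*pi*x) * (CC (2*k+1) (2*l+1) a ((1-a)/2 + (1+a)/2 * cos (2*pi*x))
        / rho (2*k+1) (2*l+1) a ((1-a)/2 + (1+a)/2 * cos (2*pi*x)) * ((1-a)/2 + (1+a)/2 * cos (2*pi*x)) ^ j)
      = pi * sqrt a * F (cos (2*pi*x)) (sin (2*pi*x))"
      unfolding F_def Let_def tr_def[symmetric] s_def[symmetric] Den_def[symmetric] .
  qed (use a in \<open>auto simp: field_simps\<close>)
qed

lemma intM:
  shows "((\<lambda>t. SS (2*k+1) (2*l+1) a t / rho (2*k+1) (2*l+1) a t * (1 / t) / sqrt ((1 - t) * (1 + t / a)))
            has_integral (pi / 2)) {-a..1}"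
proof -
  define F where "F c s = (let tr = (1-a)/2 + (1+a)/2 * c in
     Yr k l a tr / ((tr * Yr k l a tr)^2 + ((1+a)/2 * s * Xr k l a tr)^2))" for c s
  have circ: "Re (PhiM k l a w) = F (Re w) (Im w)" if "norm w = 1" for w
    unfolding F_def Let_def by (rule ReM[OF a that])
  have sym: "F c (-s) = F c s" for c s unfolding F_def Let_def by simp
  have ha: "a \<noteq> 0" using a by simp
  note P = pipeline[OF a PhiM_holo[OF ha] circ sym]
  have "Re (PhiM k l a 0) = 1/a" unfolding Phi0(3) by simp
  then have P1: "((\<lambda>x. pi * a * F (cos (2*pi*x)) (sin (2*pi*x))) has_integral (pi/2)) {0..1/2}"
    using has_integral_mult_right[OF P(1), of "pi * a"] a by simp
  show ?thesis
  proof (rule cov[where r = "(1+a)/2" and c = "(1-a)/2" and T = "{0}", OF _ _ _ _ _ _ P1])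
    show "continuous_on {0..1/2} (\<lambda>x. pi * a * F (cos (2*pi*x)) (sin (2*pi*x)))"
      by (intro continuous_intros P(2))
    fix x :: real assume x: "x \<in> {0<..<1/2}" and t0: "(1-a)/2 + (1+a)/2 * cos (2*pi*x) \<notin> {0}"
    note xf = xfacts[OF x]
    define tr where "tr = (1-a)/2 + (1+a)/2 * cos (2*pi*x)"
    define s where "s = sin (2*pi*x)"
    define Den where "Den = (tr * Yr k l a tr)^2 + ((1+a)/2 * s * Xr k l a tr)^2"
    have tr0: "tr \<noteq> 0" using t0 unfolding tr_def by simp
    have D: "Den > 0" using xf(6) unfolding Den_def tr_def s_def .
    have sa: "sqrt a > 0" using a by simp
    have s0: "s > 0" using xf(3) unfolding s_def .
    have SS: "SS (2*k+1) (2*l+1) a tr = tr / sqrt a * Yr k l a tr"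
      by (rule SS_eq[OF a]) (use xf(1,2) in \<open>simp_all add: tr_def\<close>)
    have "2 * pi * ((1+a)/2) * s * (SS (2*k+1) (2*l+1) a tr / rho (2*k+1) (2*l+1) a tr * (1 / tr) / sqrt ((1 - tr) * (1 + tr / a)))
      = 2 * pi * ((1+a)/2) * s * ((tr / sqrt a * Yr k l a tr) / ((2/a) * Den) * (1 / tr) / ((1+a)/2 * s / sqrt a))"
      unfolding SS xf(4,5)[folded tr_def s_def] Den_def ..
    also have "\<dots> = pi * a * (Yr k l a tr / Den)"
    proof -
      define r2 where "r2 = (1+a)/2"
      have r2: "r2 > 0" unfolding r2_def using a by simp
      show ?thesis unfolding r2_def[symmetric] using D sa s0 a r2 tr0 by (simp add: field_simps)
    qed
    finally show "2 * pi * ((1+a)/2) * sin (2*pi*x) * (SS (2*k+1) (2*l+1) a ((1-a)/2 + (1+a)/2 * cos (2*pi*x))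
        / rho (2*k+1) (2*l+1) a ((1-a)/2 + (1+a)/2 * cos (2*pi*x)) * (1 / ((1-a)/2 + (1+a)/2 * cos (2*pi*x)))
        / sqrt ((1 - ((1-a)/2 + (1+a)/2 * cos (2*pi*x))) * (1 + ((1-a)/2 + (1+a)/2 * cos (2*pi*x)) / a)))
      = pi * a * F (cos (2*pi*x)) (sin (2*pi*x))"
      unfolding F_def Let_def tr_def[symmetric] s_def[symmetric] Den_def[symmetric] .
  qed (use a in \<open>auto simp: field_simps\<close>)
qed

end

theorem mainTheorem3:
  fixes n m :: nat and a :: real
  assumes "n > 0" "m > 0" "odd n" "odd m" "a > 0"
  shows "((\<lambda>t. SS n m a t / rho n m a t * (1 / t) / sqrt ((1 - t) * (1 + t / a)))
            has_integral (pi / 2)) {-a..1}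
       \<and> (\<forall>j::nat. real j \<le> (real m + real n - 2) / 2 \<longrightarrow>
          ((\<lambda>t. SS n m a t / rho n m a t * t ^ j / sqrt ((1 - t) * (1 + t / a)))
            has_integral 0) {-a..1})
       \<and> (\<forall>j::nat. real j \<le> (real m + real n - 4) / 2 \<longrightarrow>
          ((\<lambda>t. CC n m a t / rho n m a t * t ^ j) has_integral 0) {-a..1})"
proof -
  obtain k where n: "n = 2*k+1" using assms(3) by (rule oddE)
  obtain l where m: "m = 2*l+1" using assms(4) by (rule oddE)
  have a: "a > 0" by (rule assms(5))
  show ?thesis unfolding n m
  proof (intro conjI allI impI)
    show "((\<lambda>t. SS (2*k+1) (2*l+1) a t / rho (2*k+1) (2*l+1) a t * (1 / t) / sqrt ((1 - t) * (1 + t / a)))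
            has_integral (pi / 2)) {-a..1}" by (rule intM[OF a])
  next
    fix j :: nat assume "real j \<le> (real (2*l+1) + real (2*k+1) - 2) / 2"
    then have "real j \<le> real (k + l)" by (simp add: field_simps)
    then have j: "j \<le> k + l" by (simp only: of_nat_le_iff)
    show "((\<lambda>t. SS (2*k+1) (2*l+1) a t / rho (2*k+1) (2*l+1) a t * t ^ j / sqrt ((1 - t) * (1 + t / a)))
            has_integral 0) {-a..1}" by (rule intS[OF a j])
  next
    fix j :: nat assume "real j \<le> (real (2*l+1) + real (2*k+1) - 4) / 2"
    then have "real j + 1 \<le> real (k + l)" by (simp add: field_simps)
    then have "real (j + 1) \<le> real (k + l)" by simp
    then have j: "j < k + l" by (simp only: of_nat_le_iff)
    show "((\<lambda>t. CC (2*k+1) (2*l+1) a t / rho (2*k+1) (2*l+1) a t * t ^ j) has_integral 0) {-a..1}"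
      by (rule intC[OF a j])
  qed
qed

end
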